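(* Let $k$ be a field, let $p\ge 1$, and let $n_1<n_2<\cdots<n_p$ be positive integers with $\gcd(n_1,\dots,n_p)=1$. Let $S=\langle (0,n_p),(n_1,n_p-n_1),(n_2,n_p-n_2),\dots,(n_{p-1},n_p-n_{p-1}),(n_p,0)\rangle\subseteq\mathbb{N}^2$ and put $n_0=0$. Then the Hilbert–Kunz multiplicity of $k[S]$ is \[e_{\mathrm{HK}}(k[S])=1+\frac{1}{n_p}\left(\sum_{r=1}^p(n_r-1)(n_r-n_{r-1})\right).\]
   Context: $k[S]=\bigoplus_{(s_1,s_2)\in S}k\,t^{s_1}u^{s_2}\subseteq k[t,u]$ is the semigroup ring of $S$, a graded $k$-algebra of dimension $2$ with homogeneous maximal ideal $\mathfrak{m}$ generated by the monomials $t^{s_1}u^{s_2}$ for the listed generators $(s_1,s_2)$ of $S$. For a $D$-dimensional graded $k$-algebra $R$ with homogeneous maximal ideal $\mathfrak{m}=\langle x_1,\dots,x_s\rangle$, set $\mathfrak{m}^{[n]}=\langle x_1^n,\dots,x_s^n\rangle$; the Hilbert–Kunz multiplicity is $e_{\mathrm{HK}}(R)=\lim_{n\to\infty}\ell_R(R/\mathfrak{m}^{[n]})/n^{D}$ (in positive characteristic $q$, taken along $n=q^e$). *)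

theory Defs
  imports "HOL-Analysis.Analysis" "HOL-Library.Poly_Mapping" "HOL-Library.Product_Plus"
    "HOL-Library.Extended_Nat"
begin

inductive_set semigroup_gen :: "(nat \<times> nat) set \<Rightarrow> (nat \<times> nat) set" for G where
  zero: "(0,0) \<in> semigroup_gen G"
| add: "g \<in> G \<Longrightarrow> s \<in> semigroup_gen G \<Longrightarrow> g + s \<in> semigroup_gen G"

text \<open>The polynomial ring k[t,u]: an element is a finitely supported map from exponent
  pairs (a,b) (standing for t^a u^b) to coefficients; multiplication is convolution.\<close>
type_synonym 'k poly2 = "(nat \<times> nat) \<Rightarrow>\<^sub>0 'k"

definition semigroup_ring :: "(nat \<times> nat) set \<Rightarrow> 'k::field poly2 set" where
  "semigroup_ring S = {f. Poly_Mapping.keys f \<subseteq> S}"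

definition monom2 :: "nat \<times> nat \<Rightarrow> 'k::field poly2" where
  "monom2 s = Poly_Mapping.single s 1"

definition is_ideal_in :: "'a::comm_ring_1 set \<Rightarrow> 'a set \<Rightarrow> bool" where
  "is_ideal_in R J \<longleftrightarrow> J \<subseteq> R \<and> 0 \<in> J \<and> (\<forall>x\<in>J. \<forall>y\<in>J. x + y \<in> J)
      \<and> (\<forall>r\<in>R. \<forall>x\<in>J. r * x \<in> J)"

definition gen_ideal :: "'a::comm_ring_1 set \<Rightarrow> 'i set \<Rightarrow> ('i \<Rightarrow> 'a) \<Rightarrow> 'a set" where
  "gen_ideal R G x = {\<Sum>g\<in>G. c g * x g | c. \<forall>g\<in>G. c g \<in> R}"

text \<open>Length of the R-module R/I: supremum of lengths l of chains of submodules
  0 = M_0 < M_1 < ... < M_l = R/I, i.e. of chains of ideals I = J_0 < ... < J_l = R.\<close>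
definition quot_length :: "'a::comm_ring_1 set \<Rightarrow> 'a set \<Rightarrow> enat" where
  "quot_length R I = Sup {enat (length Js - 1) | Js. Js \<noteq> [] \<and> hd Js = I \<and> last Js = R
      \<and> (\<forall>J\<in>set Js. is_ideal_in R J) \<and> sorted_wrt (\<subset>) Js}"

text \<open>Length of k[S]/m^[n], where m is generated by the monomials of the generators G of S.\<close>
definition hk_length :: "'k::field itself \<Rightarrow> (nat \<times> nat) set \<Rightarrow> nat \<Rightarrow> enat" where
  "hk_length TYPE('k) G n =
     quot_length (semigroup_ring (semigroup_gen G) :: 'k poly2 set)
       (gen_ideal (semigroup_ring (semigroup_gen G)) G (\<lambda>g. (monom2 g :: 'k poly2) ^ n))"

text \<open>e_HK(k[S]) = e for the 2-dimensional ring k[S]: the limit of l(R/m^[n])/n^2,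
  taken over all n in characteristic 0 and along n = q^e in characteristic q > 0.
  We also record that all these lengths are finite.\<close>
definition has_ehk :: "'k::field itself \<Rightarrow> (nat \<times> nat) set \<Rightarrow> real \<Rightarrow> bool" where
  "has_ehk TYPE('k) G e \<longleftrightarrow>
     (\<forall>n. hk_length TYPE('k) G n \<noteq> \<infinity>) \<and>
     (if CHAR('k) = 0
      then (\<lambda>n. real (the_enat (hk_length TYPE('k) G n)) / real n ^ 2) \<longlonglongrightarrow> e
      else (\<lambda>j. real (the_enat (hk_length TYPE('k) G (CHAR('k) ^ j))) / real (CHAR('k) ^ j) ^ 2)
             \<longlonglongrightarrow> e)"

end

theory Submission
  imports Defs
begin

fun ss :: "nat set \<Rightarrow> nat \<Rightarrow> nat set" where
  "ss B 0 = {0}"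
| "ss B (Suc d) = {b + y | b y. b \<in> B \<and> y \<in> ss B d}"

lemma ss_Suc: "0 \<in> B \<Longrightarrow> x \<in> ss B d \<Longrightarrow> x \<in> ss B (Suc d)"
  by auto (metis add_0)

lemma ss_mono: assumes "0 \<in> B" "x \<in> ss B d" "d \<le> d'" shows "x \<in> ss B d'"
  using assms(3) by (induction d' rule: dec_induct) (use assms ss_Suc in auto)

lemma ss_add: "x \<in> ss B i \<Longrightarrow> y \<in> ss B j \<Longrightarrow> x + y \<in> ss B (i + j)"
proof (induction i arbitrary: x)
  case 0 then show ?case by simp
next
  case (Suc i)
  then obtain b z where "b \<in> B" "z \<in> ss B i" "x = b + z" by auto
  with Suc.IH[of z] Suc.prems show ?case by auto (metis add.assoc)
qed

lemma ss_one: "b \<in> B \<Longrightarrow> b \<in> ss B 1"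
  by auto

lemma ss_scale: "x \<in> ss B 1 \<Longrightarrow> k * x \<in> ss B k"
proof (induction k)
  case 0 then show ?case by simp
next
  case (Suc k)
  then have "x + k * x \<in> ss B (1 + k)" using ss_add by blast
  then show ?case by simp
qed

lemma ss_scale': "x \<in> ss B d \<Longrightarrow> k * x \<in> ss B (k * d)"
proof (induction k)
  case 0 then show ?case by simp
next
  case (Suc k)
  then have "x + k * x \<in> ss B (d + k * d)" using ss_add by blast
  then show ?case by simp
qed

lemma ss_le: "B \<subseteq> {..N} \<Longrightarrow> x \<in> ss B d \<Longrightarrow> x \<le> d * N"
proof (induction d arbitrary: x)
  case 0 then show ?case by simp
next
  case (Suc d)
  then obtain b z where "b \<in> B" "z \<in> ss B d" "x = b + z" by auto
  with Suc show ?case by fastforce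
qed

lemma ss_small: "0 \<in> B \<Longrightarrow> x \<in> ss B d \<Longrightarrow> x \<le> j \<Longrightarrow> x \<in> ss B j"
proof (induction d arbitrary: x j)
  case 0 then show ?case using ss_mono[of B 0 0 j] by simp
next
  case (Suc d)
  then obtain b z where bz: "b \<in> B" "z \<in> ss B d" "x = b + z" by auto
  show ?case
  proof (cases "b = 0")
    case True
    then show ?thesis using Suc bz by auto
  next
    case False
    then obtain j' where j': "j = Suc j'" "z \<le> j'" using Suc.prems bz by (cases j) auto
    then have "z \<in> ss B j'" using Suc.IH bz Suc.prems by blast
    then show ?thesis using bz j' by auto
  qed
qed

lemma ss_N: "N \<in> B \<Longrightarrow> x \<in> ss B d \<Longrightarrow> x + k * N \<in> ss B (d + k)"
  using ss_add[OF _ ss_scale[OF ss_one]] by blast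

lemma ss_dual:
  assumes "B \<subseteq> {..N}" "x \<in> ss B d"
  shows "d * N - x \<in> ss ((\<lambda>b. N - b) ` B) d"
  using assms(2)
proof (induction d arbitrary: x)
  case 0 then show ?case by simp
next
  case (Suc d)
  then obtain b z where bz: "b \<in> B" "z \<in> ss B d" "x = b + z" by auto
  have "z \<le> d * N" using ss_le[OF assms(1) bz(2)] .
  moreover have "b \<le> N" using assms(1) bz(1) by auto
  ultimately have "Suc d * N - x = (N - b) + (d * N - z)" using bz by simp
  moreover have "N - b \<in> (\<lambda>b. N - b) ` B" using bz by auto
  ultimately show ?case using Suc.IH[OF bz(2)] by auto
qed

lemma dual_dual: "(B::nat set) \<subseteq> {..N} \<Longrightarrow> (\<lambda>b. N - b) ` ((\<lambda>b. N - b) ` B) = B"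
proof -
  assume a: "B \<subseteq> {..N}"
  have "\<And>b. b \<in> B \<Longrightarrow> N - (N - b) = b" using a by auto
  then show ?thesis by (auto simp: image_image image_iff)
qed

lemma dual_sub: "(\<lambda>b. N - b) ` (B::nat set) \<subseteq> {..N}" by (auto simp: image_iff)

lemma ss_dual_conv:
  assumes "B \<subseteq> {..N}" "x \<le> d * N" "d * N - x \<in> ss ((\<lambda>b. N - b) ` B) d"
  shows "x \<in> ss B d"
  using ss_dual[OF dual_sub assms(3)] assms dual_dual[OF assms(1)] by simp

definition inH :: "nat set \<Rightarrow> nat \<Rightarrow> bool" where
  "inH B x \<longleftrightarrow> (\<exists>i. x \<in> ss B i)"

lemma inH_add: "inH B x \<Longrightarrow> inH B y \<Longrightarrow> inH B (x + y)"
  unfolding inH_def using ss_add by blast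

lemma inH_scale: "inH B x \<Longrightarrow> inH B (k * x)"
  unfolding inH_def using ss_scale' by blast

lemma inH_0: "inH B 0" unfolding inH_def using ss.simps(1) by blast

lemma inH_sum: "finite X \<Longrightarrow> (\<And>x. x \<in> X \<Longrightarrow> inH B (f x)) \<Longrightarrow> inH B (\<Sum>x\<in>X. f x)"
  by (induction X rule: finite_induct) (auto intro: inH_add inH_0)

lemma large_inH:
  assumes "inH B u" "inH B v" "u = v + 1"
  shows "\<exists>c. \<forall>y\<ge>c. inH B y"
proof (cases "v = 0")
  case True
  then have "u = 1" using assms(3) by simp
  then have "\<And>y. inH B y" using inH_scale[OF assms(1)] by (metis mult.right_neutral)
  then show ?thesis by blast
next
  case False
  show ?thesis
  proof (intro exI[of _ "v * v"] allI impI)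
    fix y assume y: "v * v \<le> y"
    define q r where "q = y div v" and "r = y mod v"
    have "r < v" using False r_def by simp
    have "v * v div v \<le> q" unfolding q_def using y by (rule div_le_mono)
    then have "v \<le> q" using False by simp
    have "y = q * v + r" using q_def r_def by simp
    also have "\<dots> = r * u + (q - r) * v"
    proof -
      have "(q - r) * v + r * v = q * v" using \<open>r < v\<close> \<open>v \<le> q\<close>
        by (metis add_mult_distrib le_add_diff_inverse2 less_le_trans less_imp_le)
      then show ?thesis using assms(3) by (simp add: algebra_simps)
    qed
    finally have yy: "y = r * u + (q - r) * v" .
    have "inH B (r * u)" by (rule inH_scale[OF assms(1)])
    moreover have "inH B ((q - r) * v)" by (rule inH_scale[OF assms(2)])
    ultimately show "inH B y" unfolding yy by (rule inH_add)
  qed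
qed

lemma L1:
  assumes "B \<subseteq> {..N}" "0 \<in> B" "N \<in> B" "N \<ge> 1" "\<forall>y\<ge>c0. inH B y"
  shows "\<exists>K. \<forall>y m. c0 \<le> y \<longrightarrow> K + y div N \<le> m \<longrightarrow> y \<in> ss B m"
proof -
  have "\<forall>s\<in>{c0..<c0+N}. \<exists>i. s \<in> ss B i" using assms(5) unfolding inH_def by auto
  then obtain i where i: "\<And>s. s \<in> {c0..<c0+N} \<Longrightarrow> s \<in> ss B (i s)" by metis
  define K where "K = Max (i ` {c0..<c0+N})"
  have iK: "i s \<le> K" if "s \<in> {c0..<c0+N}" for s unfolding K_def using that by auto
  show ?thesis
  proof (intro exI[of _ K] allI impI)
    fix y m assume y: "c0 \<le> y" and m: "K + y div N \<le> m"
    define s q where "s = c0 + (y - c0) mod N" and "q = (y - c0) div N"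
    have sin: "s \<in> {c0..<c0+N}" using assms(4) s_def by simp
    have yq: "y = s + q * N" using y s_def q_def by simp
    have "s \<in> ss B K" using ss_mono[OF assms(2) i[OF sin] iK[OF sin]] .
    then have "y \<in> ss B (K + q)" using ss_N[OF assms(3)] yq by simp
    moreover have "q \<le> y div N" unfolding q_def by (rule div_le_mono) simp
    ultimately show "y \<in> ss B m" using ss_mono[OF assms(2)] m by simp
  qed
qed

lemma dual_inH:
  assumes "A \<subseteq> {..N}" "0 \<in> A" "inH A u" "inH A v" "u = v + 1"
  shows "\<exists>u' v'. inH ((\<lambda>b. N - b) ` A) u' \<and> inH ((\<lambda>b. N - b) ` A) v' \<and> u' = v' + 1"
proof -
  let ?A = "(\<lambda>b. N - b) ` A"
  obtain j k where j: "u \<in> ss A j" and k: "v \<in> ss A k" using assms unfolding inH_def by auto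
  have NA: "N \<in> ?A" using assms(2) by force
  have u1: "j * N - u \<in> ss ?A j" by (rule ss_dual[OF assms(1) j])
  have v1: "k * N - v \<in> ss ?A k" by (rule ss_dual[OF assms(1) k])
  have ul: "u \<le> j * N" by (rule ss_le[OF assms(1) j])
  have vl: "v \<le> k * N" by (rule ss_le[OF assms(1) k])
  have "(k * N - v) + j * N \<in> ss ?A (k + j)" by (rule ss_N[OF NA v1])
  moreover have "(j * N - u) + k * N \<in> ss ?A (j + k)" by (rule ss_N[OF NA u1])
  moreover have "(k * N - v) + j * N = ((j * N - u) + k * N) + 1" using ul vl assms(5) by simp
  ultimately show ?thesis unfolding inH_def by blast
qed

lemma core:
  assumes "A \<subseteq> {..N}" "0 \<in> A" "N \<in> A" "N \<ge> 1" "inH A u" "inH A v" "u = v + 1"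
  shows "\<exists>c m0. \<forall>m y. m0 \<le> m \<longrightarrow> c \<le> y \<longrightarrow> y + c \<le> m * N \<longrightarrow> y \<in> ss A m"
proof -
  let ?A = "(\<lambda>b. N - b) ` A"
  obtain c1 where c1: "\<forall>y\<ge>c1. inH A y" using large_inH[OF assms(5-7)] by blast
  obtain u' v' where uv': "inH ?A u'" "inH ?A v'" "u' = v' + 1"
    using dual_inH[OF assms(1,2,5-7)] by blast
  obtain c2 where c2: "\<forall>y\<ge>c2. inH ?A y" using large_inH[OF uv'] by blast
  obtain K1 where K1: "\<forall>y m. c1 \<le> y \<longrightarrow> K1 + y div N \<le> m \<longrightarrow> y \<in> ss A m"
    using L1[OF assms(1-4) c1] by blast
  have A1: "?A \<subseteq> {..N}" by (rule dual_sub)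
  have A2: "0 \<in> ?A" using assms(3) by force
  have A3: "N \<in> ?A" using assms(2) by force
  obtain K2 where K2: "\<forall>y m. c2 \<le> y \<longrightarrow> K2 + y div N \<le> m \<longrightarrow> y \<in> ss ?A m"
    using L1[OF A1 A2 A3 assms(4) c2] by blast
  define c K where "c = max c1 c2" and "K = max K1 K2"
  show ?thesis
  proof (rule exI[of _ c], rule exI[of _ "2 * K"], intro allI impI)
    fix m y assume m: "2 * K \<le> m" and y1: "c \<le> y" and y2: "y + c \<le> m * N"
    show "y \<in> ss A m"
    proof (cases "K + y div N \<le> m")
      case True
      then show ?thesis using K1 y1 unfolding c_def K_def by auto
    next
      case False
      define t where "t = y div N"
      have tN: "t * N \<le> y" unfolding t_def by simp
      define z where "z = m * N - y"
      have zle: "z \<le> (m - t) * N" unfolding z_def using tN by (simp add: diff_mult_distrib)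
      have "z div N \<le> (m - t) * N div N" using zle by (rule div_le_mono)
      then have "z div N \<le> m - t" using assms(4) by simp
      moreover have "m - t \<le> K" using False t_def by simp
      ultimately have "K2 + z div N \<le> m" using m unfolding K_def by simp
      moreover have "c2 \<le> z" unfolding z_def c_def using y2 y1 unfolding c_def by simp
      ultimately have "z \<in> ss ?A m" using K2 by blast
      moreover have "y \<le> m * N" using y2 by simp
      ultimately show ?thesis using ss_dual_conv[OF assms(1)] unfolding z_def by blast
    qed
  qed
qed

lemma gcd_comb:
  fixes X :: "nat set"
  assumes "finite X"
  shows "\<exists>z. (\<Sum>x\<in>X. z x * int x) = int (Gcd X)"
  using assms
proof (induction X rule: finite_induct)
  case empty then show ?case by simp
next
  case (insert x X)
  then obtain z where z: "(\<Sum>y\<in>X. z y * int y) = int (Gcd X)" by blast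
  obtain u v where uv: "u * int x + v * int (Gcd X) = gcd (int x) (int (Gcd X))"
    using bezout_int by blast
  define z' where "z' = (\<lambda>y. if y = x then u else v * z y)"
  have e1: "(\<Sum>y\<in>X. z' y * int y) = (\<Sum>y\<in>X. v * (z y * int y))"
    using insert.hyps(2) by (intro sum.cong) (auto simp: z'_def)
  have "(\<Sum>y\<in>insert x X. z' y * int y) = u * int x + (\<Sum>y\<in>X. v * (z y * int y))"
    using insert e1 by (simp add: z'_def)
  also have "\<dots> = u * int x + v * int (Gcd X)" by (simp add: sum_distrib_left[symmetric] z)
  also have "\<dots> = int (Gcd (insert x X))" using uv by simp
  finally show ?case by blast
qed

lemma gcd_uv:
  fixes X :: "nat set"
  assumes "finite X" "Gcd X = 1" "\<And>x. x \<in> X \<Longrightarrow> inH B x"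
  shows "\<exists>u v. inH B u \<and> inH B v \<and> u = v + 1"
proof -
  obtain z where z: "(\<Sum>x\<in>X. z x * int x) = 1" using gcd_comb[OF assms(1)] assms(2) by auto
  define u where "u = (\<Sum>x\<in>X. nat (max 0 (z x)) * x)"
  define v where "v = (\<Sum>x\<in>X. nat (max 0 (- z x)) * x)"
  have "int u - int v = (\<Sum>x\<in>X. (int (nat (max 0 (z x))) - int (nat (max 0 (- z x)))) * int x)"
    unfolding u_def v_def by (simp add: sum_subtractf algebra_simps)
  also have "\<dots> = (\<Sum>x\<in>X. z x * int x)"
    by (rule sum.cong) (auto simp: max_def)
  finally have "u = v + 1" using z by simp
  moreover have "inH B u" unfolding u_def using assms by (intro inH_sum inH_scale) auto
  moreover have "inH B v" unfolding v_def using assms by (intro inH_sum inH_scale) auto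
  ultimately show ?thesis by blast
qed

definition Iset :: "(nat \<times> nat) set \<Rightarrow> 'k::field poly2 set" where
  "Iset E = {f. Poly_Mapping.keys f \<subseteq> E}"

lemma Iset_S: "semigroup_ring S = Iset S"
  unfolding semigroup_ring_def Iset_def by simp

lemma lookup_smult: "Poly_Mapping.lookup (Poly_Mapping.single 0 c * h) k = (c::'k::field) * Poly_Mapping.lookup h k"
  unfolding mult_map_scale_conv_mult[symmetric] by (simp add: Poly_Mapping.map.rep_eq when_def)

lemma Iset_ideal:
  assumes "\<forall>s\<in>E. \<forall>t\<in>S. s + t \<in> E" "E \<subseteq> S"
  shows "is_ideal_in (semigroup_ring S) (Iset E :: 'k::field poly2 set)"
  unfolding is_ideal_in_def
proof (intro conjI ballI)
  show "Iset E \<subseteq> semigroup_ring S" using assms(2) unfolding Iset_def semigroup_ring_def by auto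
  show "(0::'k poly2) \<in> Iset E" unfolding Iset_def by simp
  fix x y :: "'k poly2" assume "x \<in> Iset E" "y \<in> Iset E"
  then show "x + y \<in> Iset E" unfolding Iset_def using keys_add[of x y] by auto
next
  fix r x :: "'k poly2" assume r: "r \<in> semigroup_ring S" and x: "x \<in> Iset E"
  have "Poly_Mapping.keys (r * x) \<subseteq> E"
  proof
    fix k assume "k \<in> Poly_Mapping.keys (r * x)"
    then obtain a b where "a \<in> Poly_Mapping.keys r" "b \<in> Poly_Mapping.keys x" "k = a + b"
      using keys_mult[of r x] by blast
    then show "k \<in> E" using r x assms(1) unfolding Iset_def semigroup_ring_def
      by (metis (no_types, lifting) add.commute mem_Collect_eq subsetD)
  qed
  then show "r * x \<in> Iset E" unfolding Iset_def by simp
qed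

lemma hd_sub: "sorted_wrt (\<subset>) Js \<Longrightarrow> J \<in> set Js \<Longrightarrow> hd Js \<subseteq> J"
  by (cases Js) auto

lemma chain_exists:
  assumes S: "\<forall>s\<in>S. \<forall>t\<in>S. s + t \<in> S" "(0::nat\<times>nat) \<in> S"
  shows "finite (S - E) \<Longrightarrow> E \<subseteq> S \<Longrightarrow> (\<forall>s\<in>E. \<forall>t\<in>S. s + t \<in> E) \<Longrightarrow>
    \<exists>Js. Js \<noteq> [] \<and> hd Js = (Iset E :: 'k::field poly2 set) \<and> last Js = semigroup_ring S
      \<and> (\<forall>J\<in>set Js. is_ideal_in (semigroup_ring S) J) \<and> sorted_wrt (\<subset>) Js
      \<and> length Js = card (S - E) + 1"
proof (induction "card (S - E)" arbitrary: E)
  case 0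
  then have "E = S" by auto
  then show ?case using Iset_ideal[of S S] S by (intro exI[of _ "[Iset E]"]) (auto simp: Iset_S)
next
  case (Suc k)
  define M where "M = S - E"
  have cM: "card M = Suc k" using Suc.hyps(2) M_def by simp
  have Mne: "M \<noteq> {}" "finite M" using cM Suc.prems(1) M_def by (metis card.empty nat.distinct(1), simp)
  define D where "D = Max ((\<lambda>t. fst t + snd t) ` M)"
  have "D \<in> (\<lambda>t. fst t + snd t) ` M" unfolding D_def using Mne by (intro Max_in) auto
  then obtain s where s: "s \<in> M" "fst s + snd s = D" by auto
  have smax: "fst t + snd t \<le> D" if "t \<in> M" for t
    unfolding D_def using that Mne by simp
  define E' where "E' = insert s E"
  have cE': "card (S - E') = k" using Suc.hyps(2) s M_def Mne unfolding E'_def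
    by (metis Diff_insert card_Diff_singleton diff_Suc_1)
  have fE': "finite (S - E')" using Suc.prems(1) unfolding E'_def by auto
  have sE': "E' \<subseteq> S" using Suc.prems(2) s M_def unfolding E'_def by auto
  have uE': "\<forall>x\<in>E'. \<forall>t\<in>S. x + t \<in> E'"
  proof (intro ballI)
    fix x t assume x: "x \<in> E'" and t: "t \<in> S"
    show "x + t \<in> E'"
    proof (cases "x \<in> E")
      case True then show ?thesis using Suc.prems(3) t unfolding E'_def by auto
    next
      case False
      then have xs: "x = s" using x unfolding E'_def by auto
      show ?thesis
      proof (cases "t = 0")
        case True then show ?thesis using xs unfolding E'_def by simp
      next
        case False
        then have "fst t + snd t > 0" by (cases t) (auto simp: zero_prod_def)
        then have "fst (s + t) + snd (s + t) > D" using s by auto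
        then have "s + t \<notin> M" using smax[of "s + t"] by linarith
        moreover have "s + t \<in> S" using S(1) t s M_def by auto
        ultimately show ?thesis using xs unfolding M_def E'_def by auto
      qed
    qed
  qed
  obtain Js where Js: "Js \<noteq> []" "hd Js = (Iset E' :: 'k poly2 set)" "last Js = semigroup_ring S"
      "\<forall>J\<in>set Js. is_ideal_in (semigroup_ring S) J" "sorted_wrt (\<subset>) Js"
      "length Js = card (S - E') + 1"
    using Suc.hyps(1)[OF cE'[symmetric] fE' sE' uE'] by blast
  have sub: "(Iset E :: 'k poly2 set) \<subset> Iset E'"
  proof
    show "(Iset E :: 'k poly2 set) \<subseteq> Iset E'" unfolding Iset_def E'_def by auto
    have "Poly_Mapping.single s (1::'k) \<in> Iset E'" unfolding Iset_def E'_def by simp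
    moreover have "Poly_Mapping.single s (1::'k) \<notin> Iset E" using s M_def unfolding Iset_def by simp
    ultimately show "(Iset E :: 'k poly2 set) \<noteq> Iset E'" by blast
  qed
  have "\<forall>J\<in>set Js. (Iset E :: 'k poly2 set) \<subset> J"
    using hd_sub[OF Js(5)] Js(2) sub by blast
  moreover have "is_ideal_in (semigroup_ring S) (Iset E :: 'k poly2 set)"
    using Iset_ideal Suc.prems by blast
  ultimately show ?case using Js Suc.hyps(2) cE'
    by (intro exI[of _ "Iset E # Js"]) (auto simp: M_def)
qed

definition LS :: "(nat \<times> nat) set \<Rightarrow> 'k::field poly2 set \<Rightarrow> nat set" where
  "LS M J = {Max (prod_encode ` (Poly_Mapping.keys f \<inter> M)) | f. f \<in> J \<and> Poly_Mapping.keys f \<inter> M \<noteq> {}}"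

lemma LS_sub: "LS M (J :: 'k::field poly2 set) \<subseteq> prod_encode ` M"
proof
  fix x assume "x \<in> LS M J"
  then obtain f :: "'k poly2" where f: "x = Max (prod_encode ` (Poly_Mapping.keys f \<inter> M))" "Poly_Mapping.keys f \<inter> M \<noteq> {}"
    unfolding LS_def by blast
  then have "x \<in> prod_encode ` (Poly_Mapping.keys f \<inter> M)" unfolding f(1) by (intro Max_in) (use f(2) in auto)
  then show "x \<in> prod_encode ` M" by auto
qed

lemma LS_mono: "J1 \<subseteq> J2 \<Longrightarrow> LS M J1 \<subseteq> LS M J2"
  unfolding LS_def by blast

lemma key:
  assumes S0: "(0::nat\<times>nat) \<in> S"
    and M: "M = S - E"
    and I1: "is_ideal_in (semigroup_ring S) (J1 :: 'k::field poly2 set)"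
    and I2: "is_ideal_in (semigroup_ring S) J2"
    and sub: "Iset E \<subseteq> J1" "J1 \<subseteq> J2"
    and L: "LS M J2 \<subseteq> LS M J1"
  shows "J2 \<subseteq> J1"
proof -
  have one: "Poly_Mapping.single 0 c \<in> semigroup_ring S" for c :: 'k
    using S0 unfolding semigroup_ring_def by simp
  have clos: "f + g \<in> J" "Poly_Mapping.single 0 c * f \<in> J"
    if "is_ideal_in (semigroup_ring S) J" "f \<in> J" "g \<in> J" for J f g and c :: 'k
    using that one unfolding is_ideal_in_def by auto
  have P: "\<forall>f\<in>J2. (\<forall>s\<in>Poly_Mapping.keys f \<inter> M. prod_encode s < k) \<longrightarrow> f \<in> J1" for k
  proof (induction k)
    case 0
    show ?case
    proof (intro ballI impI)
      fix f assume f: "f \<in> J2" "\<forall>s\<in>Poly_Mapping.keys f \<inter> M. prod_encode s < 0"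
      have "f \<in> semigroup_ring S" using I2 f unfolding is_ideal_in_def by auto
      then have "Poly_Mapping.keys f \<subseteq> E" using f(2) M unfolding semigroup_ring_def by auto
      then show "f \<in> J1" using sub unfolding Iset_def by auto
    qed
  next
    case (Suc k)
    show ?case
    proof (intro ballI impI)
      fix f assume f: "f \<in> J2" "\<forall>s\<in>Poly_Mapping.keys f \<inter> M. prod_encode s < Suc k"
      show "f \<in> J1"
      proof (cases "\<forall>s\<in>Poly_Mapping.keys f \<inter> M. prod_encode s < k")
        case True then show ?thesis using Suc.IH f by blast
      next
        case False
        then obtain s0 where s0: "s0 \<in> Poly_Mapping.keys f \<inter> M" "prod_encode s0 = k"
          using f(2) by force
        have "Max (prod_encode ` (Poly_Mapping.keys f \<inter> M)) = k"
          using s0 f(2) by (intro Max_eqI) (auto, metis IntI less_Suc_eq_le)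
        then have "k \<in> LS M J2" unfolding LS_def using f(1) s0 by blast
        then have "k \<in> LS M J1" using L by blast
        then obtain h where h: "h \<in> J1" "Poly_Mapping.keys h \<inter> M \<noteq> {}"
            "Max (prod_encode ` (Poly_Mapping.keys h \<inter> M)) = k"
          unfolding LS_def by blast
        have hle: "prod_encode s \<le> k" if "s \<in> Poly_Mapping.keys h \<inter> M" for s
          using h(3) that by (metis Max_ge finite_Int finite_imageI finite_keys image_eqI)
        have "k \<in> prod_encode ` (Poly_Mapping.keys h \<inter> M)"
          using h(2,3) by (metis Max_in finite_Int finite_imageI finite_keys image_is_empty)
        then have s0h: "s0 \<in> Poly_Mapping.keys h" using s0(2) by auto
        define c where "c = Poly_Mapping.lookup f s0 / Poly_Mapping.lookup h s0"
        define g where "g = Poly_Mapping.single 0 c * h"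
        define f' where "f' = f + Poly_Mapping.single 0 (-1) * g"
        have gJ1: "g \<in> J1" unfolding g_def using clos[OF I1 h(1) h(1)] by blast
        then have gJ2: "g \<in> J2" using sub by blast
        have "Poly_Mapping.single 0 (-1) * g \<in> J2" using clos(2)[OF I2 gJ2 gJ2] .
        then have f'J2: "f' \<in> J2" unfolding f'_def using clos(1)[OF I2 f(1)] by blast
        have lf': "Poly_Mapping.lookup f' s = Poly_Mapping.lookup f s - c * Poly_Mapping.lookup h s" for s
          unfolding f'_def g_def by (simp add: lookup_add lookup_smult)
        have "\<forall>s\<in>Poly_Mapping.keys f' \<inter> M. prod_encode s < k"
        proof
          fix s assume s: "s \<in> Poly_Mapping.keys f' \<inter> M"
          then have "Poly_Mapping.lookup f s \<noteq> 0 \<or> Poly_Mapping.lookup h s \<noteq> 0" using lf'[of s] by (auto simp: in_keys_iff)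
          then have le: "prod_encode s \<le> k"
          proof
            assume "Poly_Mapping.lookup f s \<noteq> 0"
            then have "s \<in> Poly_Mapping.keys f \<inter> M" using s by (simp add: in_keys_iff)
            then have "prod_encode s < Suc k" using f(2) by blast
            then show ?thesis by simp
          next
            assume "Poly_Mapping.lookup h s \<noteq> 0"
            then have "s \<in> Poly_Mapping.keys h \<inter> M" using s by (simp add: in_keys_iff)
            then show ?thesis using hle by blast
          qed
          have "Poly_Mapping.lookup f' s0 = 0" using lf'[of s0] s0h unfolding c_def by (simp add: in_keys_iff)
          then have "s \<noteq> s0" using s by (auto simp: in_keys_iff)
          then have "prod_encode s \<noteq> k" using s0(2) by auto
          then show "prod_encode s < k" using le by simp
        qed
        then have "f' \<in> J1" using Suc.IH f'J2 by blast
        moreover have "f = f' + g" unfolding f'_def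
          by (simp add: single_uminus)
        ultimately show ?thesis using clos[OF I1 _ gJ1] by metis
      qed
    qed
  qed
  show ?thesis
  proof
    fix f assume f: "f \<in> J2"
    define k where "k = Suc (Max (insert 0 (prod_encode ` Poly_Mapping.keys f)))"
    have "\<forall>s\<in>Poly_Mapping.keys f \<inter> M. prod_encode s < k"
      unfolding k_def by (auto simp: le_imp_less_Suc)
    then show "f \<in> J1" using P[of k] f by blast
  qed
qed

lemma chain_bound:
  assumes S0: "(0::nat\<times>nat) \<in> S" and M: "M = S - E" and fM: "finite M"
  shows "sorted_wrt (\<subset>) Js \<Longrightarrow> Js \<noteq> [] \<Longrightarrow>
    (\<forall>J\<in>set Js. is_ideal_in (semigroup_ring S) J \<and> (Iset E :: 'k::field poly2 set) \<subseteq> J) \<Longrightarrow>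
    length Js - 1 + card (LS M (hd Js)) \<le> card (LS M (last Js))"
proof (induction Js)
  case Nil then show ?case by simp
next
  case (Cons x xs)
  show ?case
  proof (cases "xs = []")
    case True then show ?thesis by simp
  next
    case False
    have IH: "length xs - 1 + card (LS M (hd xs)) \<le> card (LS M (last xs))"
      using Cons False by auto
    have xs: "x \<subset> hd xs" using Cons.prems(1) False by (cases xs) auto
    have "LS M x \<noteq> LS M (hd xs)"
    proof
      assume "LS M x = LS M (hd xs)"
      then have "hd xs \<subseteq> x" using key[OF S0 M, of x "hd xs"] Cons.prems(3) xs False
        by (metis equalityE hd_in_set less_imp_le list.set_intros(1) list.set_intros(2))
      then show False using xs by blast
    qed
    then have "LS M x \<subset> LS M (hd xs)" using LS_mono[of x "hd xs" M] xs by blast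
    moreover have "finite (LS M (hd xs))" using LS_sub[of M "hd xs"] fM finite_surj by blast
    ultimately have "card (LS M x) < card (LS M (hd xs))" by (rule psubset_card_mono[rotated])
    then show ?thesis using IH False by simp
  qed
qed

theorem quot_length_monomial:
  assumes S: "\<forall>s\<in>S. \<forall>t\<in>S. s + t \<in> S" "(0::nat\<times>nat) \<in> S"
    and E: "E \<subseteq> S" "\<forall>s\<in>E. \<forall>t\<in>S. s + t \<in> E" "finite (S - E)"
  shows "quot_length (semigroup_ring S) (Iset E :: 'k::field poly2 set) = enat (card (S - E))"
proof -
  define X where "X = {enat (length Js - 1) | Js. Js \<noteq> [] \<and> hd Js = (Iset E :: 'k poly2 set) \<and> last Js = semigroup_ring S
      \<and> (\<forall>J\<in>set Js. is_ideal_in (semigroup_ring S) J) \<and> sorted_wrt (\<subset>) Js}"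
  have "Sup X \<le> enat (card (S - E))"
  proof (rule Sup_least)
    fix x assume "x \<in> X"
    then obtain Js where Js: "x = enat (length Js - 1)" "Js \<noteq> []" "hd Js = (Iset E :: 'k poly2 set)"
      "\<forall>J\<in>set Js. is_ideal_in (semigroup_ring S) J" "sorted_wrt (\<subset>) Js" unfolding X_def by blast
    have "\<forall>J\<in>set Js. is_ideal_in (semigroup_ring S) J \<and> (Iset E :: 'k poly2 set) \<subseteq> J"
    proof
      fix J assume J: "J \<in> set Js"
      then have "hd Js \<subseteq> J" by (rule hd_sub[OF Js(5)])
      then show "is_ideal_in (semigroup_ring S) J \<and> (Iset E :: 'k poly2 set) \<subseteq> J"
        using Js(3,4) J by simp
    qed
    then have "length Js - 1 + card (LS (S - E) (hd Js)) \<le> card (LS (S - E) (last Js))"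
      using chain_bound[OF S(2) refl E(3) Js(5) Js(2)] by blast
    moreover have "card (LS (S - E) (last Js)) \<le> card (S - E)"
    proof -
      have "card (LS (S - E) (last Js)) \<le> card (prod_encode ` (S - E))"
        using LS_sub[of "S - E" "last Js"] E(3) by (intro card_mono) auto
      also have "\<dots> \<le> card (S - E)" by (rule card_image_le[OF E(3)])
      finally show ?thesis .
    qed
    ultimately show "x \<le> enat (card (S - E))" using Js(1) by simp
  qed
  moreover have "enat (card (S - E)) \<le> Sup X"
  proof -
    obtain Js where Js: "Js \<noteq> [] \<and> hd Js = (Iset E :: 'k poly2 set) \<and> last Js = semigroup_ring S
      \<and> (\<forall>J\<in>set Js. is_ideal_in (semigroup_ring S) J) \<and> sorted_wrt (\<subset>) Js
      \<and> length Js = card (S - E) + 1" using chain_exists[OF S E(3) E(1) E(2)] by blast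
    then have "enat (length Js - 1) \<in> X" unfolding X_def by blast
    moreover have "length Js - 1 = card (S - E)" using Js by simp
    ultimately show ?thesis by (metis Sup_upper)
  qed
  ultimately have "Sup X = enat (card (S - E))" by (rule antisym)
  then show ?thesis unfolding quot_length_def X_def .
qed

lemma sg_add: "s \<in> semigroup_gen G \<Longrightarrow> t \<in> semigroup_gen G \<Longrightarrow> s + t \<in> semigroup_gen G"
proof (induction s rule: semigroup_gen.induct)
  case zero
  then show ?case by (metis add_0 zero_prod_def)
next
  case (add g s)
  have "g + s + t = g + (s + t)" by (rule add.assoc)
  then show ?case using semigroup_gen.add[OF add.hyps(1) add.IH[OF add.prems]] by simp
qed

lemma sg_zero: "(0::nat\<times>nat) \<in> semigroup_gen G"
  using semigroup_gen.zero by (simp add: zero_prod_def)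

lemma sg_gen: "g \<in> G \<Longrightarrow> g \<in> semigroup_gen G"
proof -
  assume "g \<in> G"
  then have "g + (0, 0) \<in> semigroup_gen G" by (rule semigroup_gen.add[OF _ semigroup_gen.zero])
  then show ?thesis by (metis add.right_neutral zero_prod_def)
qed

definition smul :: "nat \<Rightarrow> nat \<times> nat \<Rightarrow> nat \<times> nat" where
  "smul n g = (n * fst g, n * snd g)"

lemma sg_smul: "g \<in> G \<Longrightarrow> smul n g \<in> semigroup_gen G"
proof (induction n)
  case 0 then show ?case using semigroup_gen.zero by (simp add: smul_def)
next
  case (Suc n)
  have "smul (Suc n) g = g + smul n g" by (simp add: smul_def prod_eq_iff)
  then show ?case using semigroup_gen.add[OF Suc.prems Suc.IH[OF Suc.prems]] by simp
qed

lemma monom_pow: "(monom2 g :: 'k::field poly2) ^ n = Poly_Mapping.single (smul n g) 1"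
proof (induction n)
  case 0 then show ?case by (simp add: smul_def zero_prod_def[symmetric])
next
  case (Suc n)
  have "smul (Suc n) g = g + smul n g" by (simp add: smul_def prod_eq_iff)
  then show ?case using Suc by (simp add: monom2_def mult_single)
qed

lemma pm_sum_single: "f = (\<Sum>s\<in>Poly_Mapping.keys f. Poly_Mapping.single s (Poly_Mapping.lookup f s))"
proof (rule poly_mapping_eqI)
  fix k
  show "Poly_Mapping.lookup f k = Poly_Mapping.lookup (\<Sum>s\<in>Poly_Mapping.keys f. Poly_Mapping.single s (Poly_Mapping.lookup f s)) k"
    unfolding lookup_sum
    by (cases "k \<in> Poly_Mapping.keys f") (simp_all add: lookup_single when_def in_keys_iff)
qed

definition Eset :: "(nat \<times> nat) set \<Rightarrow> nat \<Rightarrow> (nat \<times> nat) set" where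
  "Eset G n = {s. \<exists>g\<in>G. \<exists>t\<in>semigroup_gen G. s = smul n g + t}"

lemma Eset_sub: "Eset G n \<subseteq> semigroup_gen G"
  unfolding Eset_def using sg_smul sg_add by blast

lemma Eset_up: "\<forall>s\<in>Eset G n. \<forall>t\<in>semigroup_gen G. s + t \<in> Eset G n"
proof (intro ballI)
  fix s t assume s: "s \<in> Eset G n" and t: "t \<in> semigroup_gen G"
  then obtain g u where gu: "g \<in> G" "u \<in> semigroup_gen G" "s = smul n g + u" unfolding Eset_def by blast
  then have "s + t = smul n g + (u + t)" by (simp add: add.assoc)
  moreover have "u + t \<in> semigroup_gen G" using sg_add gu(2) t by blast
  ultimately show "s + t \<in> Eset G n" unfolding Eset_def using gu(1) by blast
qed

lemma gen_ideal_eq: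
  assumes "finite G"
  shows "gen_ideal (semigroup_ring (semigroup_gen G)) G (\<lambda>g. (monom2 g :: 'k::field poly2) ^ n)
    = Iset (Eset G n)"
proof
  let ?S = "semigroup_gen G"
  show "gen_ideal (semigroup_ring ?S) G (\<lambda>g. (monom2 g :: 'k poly2) ^ n) \<subseteq> Iset (Eset G n)"
  proof
    fix f assume "f \<in> gen_ideal (semigroup_ring ?S) G (\<lambda>g. (monom2 g :: 'k poly2) ^ n)"
    then obtain c where c: "f = (\<Sum>g\<in>G. c g * monom2 g ^ n)" "\<forall>g\<in>G. c g \<in> semigroup_ring ?S"
      unfolding gen_ideal_def by blast
    have "Poly_Mapping.keys (c g * monom2 g ^ n) \<subseteq> Eset G n" if g: "g \<in> G" for g
    proof
      fix k assume "k \<in> Poly_Mapping.keys (c g * monom2 g ^ n)"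
      have ks: "Poly_Mapping.keys (Poly_Mapping.single (smul n g) (1::'k)) = {smul n g}" by simp
      have "k \<in> {a + b | a b. a \<in> Poly_Mapping.keys (c g) \<and> b \<in> {smul n g}}"
        using keys_mult[of "c g" "Poly_Mapping.single (smul n g) (1::'k)"] \<open>k \<in> _\<close>
        unfolding monom_pow ks by blast
      then obtain u where "u \<in> Poly_Mapping.keys (c g)" "k = u + smul n g" by blast
      then show "k \<in> Eset G n" using c(2) g unfolding Eset_def semigroup_ring_def
        by (auto simp: add.commute)
    qed
    then have "Poly_Mapping.keys f \<subseteq> Eset G n" unfolding c(1) using keys_sum by fast
    then show "f \<in> Iset (Eset G n)" unfolding Iset_def by simp
  qed
next
  let ?S = "semigroup_gen G"
  show "Iset (Eset G n) \<subseteq> gen_ideal (semigroup_ring ?S) G (\<lambda>g. (monom2 g :: 'k poly2) ^ n)"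
  proof
    fix f :: "'k poly2" assume f: "f \<in> Iset (Eset G n)"
    have "\<forall>s\<in>Poly_Mapping.keys f. \<exists>g t. g \<in> G \<and> t \<in> ?S \<and> s = smul n g + t"
      using f unfolding Iset_def Eset_def by blast
    then obtain gs ts where gt: "\<And>s. s \<in> Poly_Mapping.keys f \<Longrightarrow> gs s \<in> G \<and> ts s \<in> ?S \<and> s = smul n (gs s) + ts s"
      by metis
    define c where "c g = (\<Sum>s\<in>{s \<in> Poly_Mapping.keys f. gs s = g}. Poly_Mapping.single (ts s) (Poly_Mapping.lookup f s))" for g
    have cR: "c g \<in> semigroup_ring ?S" for g
    proof -
      have "Poly_Mapping.keys (c g) \<subseteq> ?S" unfolding c_def
        using keys_sum[of _ "{s \<in> Poly_Mapping.keys f. gs s = g}"] gt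
        by (force split: if_splits)
      then show ?thesis unfolding semigroup_ring_def by simp
    qed
    have "(\<Sum>g\<in>G. c g * monom2 g ^ n) = (\<Sum>g\<in>G. \<Sum>s\<in>{s \<in> Poly_Mapping.keys f. gs s = g}. Poly_Mapping.single s (Poly_Mapping.lookup f s))"
    proof (rule sum.cong[OF refl])
      fix g assume "g \<in> G"
      show "c g * monom2 g ^ n = (\<Sum>s\<in>{s \<in> Poly_Mapping.keys f. gs s = g}. Poly_Mapping.single s (Poly_Mapping.lookup f s))"
        unfolding c_def monom_pow sum_distrib_right
      proof (rule sum.cong[OF refl])
        fix s assume "s \<in> {s \<in> Poly_Mapping.keys f. gs s = g}"
        then have "ts s + smul n g = s" using gt[of s] by (auto simp: add.commute)
        then show "Poly_Mapping.single (ts s) (Poly_Mapping.lookup f s) * Poly_Mapping.single (smul n g) 1 = Poly_Mapping.single s (Poly_Mapping.lookup f s)"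
          by (simp add: mult_single)
      qed
    qed
    also have "\<dots> = (\<Sum>s\<in>Poly_Mapping.keys f. Poly_Mapping.single s (Poly_Mapping.lookup f s))"
      by (rule sum.group) (use assms gt in auto)
    also have "\<dots> = f" by (rule pm_sum_single[symmetric])
    finally show "f \<in> gen_ideal (semigroup_ring ?S) G (\<lambda>g. (monom2 g :: 'k poly2) ^ n)"
      unfolding gen_ideal_def using cR by (intro CollectI exI[of _ c]) auto
  qed
qed

lemma hk_length_eq:
  assumes "finite G" "finite (semigroup_gen G - Eset G n)"
  shows "hk_length TYPE('k::field) G n = enat (card (semigroup_gen G - Eset G n))"
  unfolding hk_length_def gen_ideal_eq[OF assms(1)]
  by (rule quot_length_monomial) (use sg_add sg_zero Eset_sub Eset_up assms(2) in auto)

locale hkset =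
  fixes a :: "nat \<Rightarrow> nat" and p :: nat
  assumes mono: "\<And>i j. i \<le> j \<Longrightarrow> j \<le> p \<Longrightarrow> a i \<le> a j"
    and a0: "a 0 = 0" and Npos: "a p \<ge> 1"
begin

abbreviation "N \<equiv> a p"
abbreviation "A \<equiv> a ` {..p}"
abbreviation "G \<equiv> {(a r, a p - a r) | r. r \<le> p}"

lemma A_sub: "A \<subseteq> {..N}" using mono by auto
lemma A0: "0 \<in> A" using a0 by force
lemma AN: "N \<in> A" by auto
lemma finG: "finite G"
proof -
  have "G = (\<lambda>r. (a r, a p - a r)) ` {..p}" by auto
  then show ?thesis by simp
qed

lemma semi_char1: "s \<in> semigroup_gen G \<Longrightarrow> \<exists>d. fst s + snd s = d * N \<and> fst s \<in> ss A d"
proof (induction s rule: semigroup_gen.induct)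
  case zero
  then show ?case by (intro exI[of _ 0]) simp
next
  case (add g s)
  then obtain r where r: "r \<le> p" "g = (a r, N - a r)" by blast
  obtain d where d: "fst s + snd s = d * N" "fst s \<in> ss A d" using add.IH by blast
  have "a r \<le> N" using mono r(1) by simp
  then have "fst (g + s) + snd (g + s) = Suc d * N" using r d by simp
  moreover have "fst (g + s) \<in> ss A (Suc d)"
  proof -
    have "a r \<in> A" using r(1) by blast
    then have "a r + fst s \<in> ss A (Suc d)" using d(2) by (simp only: ss.simps) blast
    then show ?thesis using r(2) by simp
  qed
  ultimately show ?case by blast
qed

lemma semi_char2: "x \<in> ss A d \<Longrightarrow> (x, d * N - x) \<in> semigroup_gen G"
proof (induction d arbitrary: x)
  case 0 then show ?case using semigroup_gen.zero by simp
next
  case (Suc d)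
  then obtain b z where "b \<in> A" "z \<in> ss A d" "x = b + z" by (simp only: ss.simps) blast
  then obtain r where rz: "r \<le> p" "z \<in> ss A d" "x = a r + z" by blast
  have zl: "z \<le> d * N" using ss_le[OF A_sub rz(2)] .
  have arl: "a r \<le> N" using mono rz(1) by simp
  have eq: "(x, Suc d * N - x) = (a r, N - a r) + (z, d * N - z)"
  proof -
    have "Suc d * N - x = (N - a r) + (d * N - z)" using zl arl rz(3) by simp
    then show ?thesis using rz(3) by simp
  qed
  have gG: "(a r, N - a r) \<in> G" using rz(1) by blast
  have "(a r, N - a r) + (z, d * N - z) \<in> semigroup_gen G"
    by (rule semigroup_gen.add[OF gG Suc.IH[OF rz(2)]])
  then show ?case by (simp only: eq)
qed

lemma semi_char: "(x, y) \<in> semigroup_gen G \<longleftrightarrow> (\<exists>d. x + y = d * N \<and> x \<in> ss A d)"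
proof
  assume "(x, y) \<in> semigroup_gen G"
  from semi_char1[OF this] show "\<exists>d. x + y = d * N \<and> x \<in> ss A d" by (simp only: fst_conv snd_conv)
next
  assume "\<exists>d. x + y = d * N \<and> x \<in> ss A d"
  then obtain d where "x + y = d * N" "x \<in> ss A d" by blast
  then have yy: "y = d * N - x" by simp
  show "(x, y) \<in> semigroup_gen G" using semi_char2[OF \<open>x \<in> ss A d\<close>] unfolding yy .
qed

definition Pset :: "nat \<Rightarrow> (nat \<times> nat) set" where
  "Pset n = {(d, x). x \<in> ss A d \<and> \<not> (n \<le> d \<and> (\<exists>r\<le>p. n * a r \<le> x \<and> x - n * a r \<in> ss A (d - n)))}"

lemma E_char:
  assumes x: "x \<in> ss A d"
  shows "(x, d * N - x) \<in> Eset G n \<longleftrightarrow> (n \<le> d \<and> (\<exists>r\<le>p. n * a r \<le> x \<and> x - n * a r \<in> ss A (d - n)))"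
proof
  assume "(x, d * N - x) \<in> Eset G n"
  then obtain g t where gt: "g \<in> G" "t \<in> semigroup_gen G" "(x, d * N - x) = smul n g + t"
    unfolding Eset_def by blast
  obtain r where r: "r \<le> p" "g = (a r, N - a r)" using gt(1) by blast
  obtain d' where d': "fst t + snd t = d' * N" "fst t \<in> ss A d'" using semi_char1[OF gt(2)] by blast
  have arl: "a r \<le> N" using mono r(1) by simp
  have xl: "x \<le> d * N" using ss_le[OF A_sub x] .
  have f1: "x = fst (smul n g + t)" using gt(3) by (metis fst_conv)
  have f2: "d * N - x = snd (smul n g + t)" using gt(3) by (metis snd_conv)
  have e1: "x = n * a r + fst t" using f1 r(2) by (simp add: smul_def)
  have e2: "d * N - x = n * (N - a r) + snd t" using f2 r(2) by (simp add: smul_def)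
  have "n * (N - a r) = n * N - n * a r" by (simp add: diff_mult_distrib2)
  moreover have "n * a r \<le> n * N" using arl by simp
  ultimately have "d * N = n * N + d' * N" using e1 e2 xl d'(1) by linarith
  then have "d = n + d'" using Npos by (metis add_mult_distrib mult_cancel_right not_one_le_zero)
  then show "n \<le> d \<and> (\<exists>r\<le>p. n * a r \<le> x \<and> x - n * a r \<in> ss A (d - n))"
    using e1 d'(2) r(1) by auto
next
  assume "n \<le> d \<and> (\<exists>r\<le>p. n * a r \<le> x \<and> x - n * a r \<in> ss A (d - n))"
  then obtain r where r: "n \<le> d" "r \<le> p" "n * a r \<le> x" "x - n * a r \<in> ss A (d - n)" by blast
  have arl: "a r \<le> N" using mono r(2) by simp
  have tl: "x - n * a r \<le> (d - n) * N" using ss_le[OF A_sub r(4)] .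
  have dN: "d * N = n * N + (d - n) * N" using r(1) by (metis add_mult_distrib le_add_diff_inverse)
  have nN: "n * N = n * a r + n * (N - a r)" using arl by (metis add_mult_distrib2 le_add_diff_inverse)
  define t where "t = (x - n * a r, (d - n) * N - (x - n * a r))"
  have tS: "t \<in> semigroup_gen G" unfolding t_def by (rule semi_char2[OF r(4)])
  have c1: "fst (smul n (a r, N - a r) + t) = x" using r(3) by (simp add: t_def smul_def)
  have c2': "snd (smul n (a r, N - a r) + t) = n * (N - a r) + ((d - n) * N - (x - n * a r))"
    by (simp add: t_def smul_def)
  have c2: "snd (smul n (a r, N - a r) + t) = d * N - x" unfolding c2' using r(3) tl dN nN by linarith
  have "(x, d * N - x) = smul n (a r, N - a r) + t" using c1 c2 by (simp add: prod_eq_iff)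
  moreover have "(a r, N - a r) \<in> G" using r(2) by blast
  ultimately show "(x, d * N - x) \<in> Eset G n" unfolding Eset_def using tS by blast
qed

lemma card_SE: "card (semigroup_gen G - Eset G n) = card (Pset n)"
  and fin_SE: "finite (Pset n) \<Longrightarrow> finite (semigroup_gen G - Eset G n)"
proof -
  define psi where "psi = (\<lambda>(d::nat, x::nat). (x, d * N - x))"
  have inj: "inj_on psi (Pset n)"
  proof (rule inj_onI)
    fix u v assume u: "u \<in> Pset n" and v: "v \<in> Pset n" and e: "psi u = psi v"
    obtain d x where dx: "u = (d, x)" by (cases u)
    obtain d' x' where dx': "v = (d', x')" by (cases v)
    have "x \<le> d * N" using u dx ss_le[OF A_sub] unfolding Pset_def by auto
    moreover have "x' \<le> d' * N" using v dx' ss_le[OF A_sub] unfolding Pset_def by auto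
    moreover have "x = x'" "d * N - x = d' * N - x'" using e dx dx' unfolding psi_def by auto
    ultimately have "d * N = d' * N" by linarith
    then have "d = d'" using Npos by simp
    then show "u = v" using dx dx' \<open>x = x'\<close> by simp
  qed
  have img: "psi ` Pset n = semigroup_gen G - Eset G n"
  proof
    show "psi ` Pset n \<subseteq> semigroup_gen G - Eset G n"
    proof
      fix w assume "w \<in> psi ` Pset n"
      then obtain d x where dx: "(d, x) \<in> Pset n" "w = (x, d * N - x)" unfolding psi_def by auto
      then have x: "x \<in> ss A d" unfolding Pset_def by auto
      show "w \<in> semigroup_gen G - Eset G n"
        using dx E_char[OF x, of n] semi_char2[OF x] unfolding Pset_def by auto
    qed
  next
    show "semigroup_gen G - Eset G n \<subseteq> psi ` Pset n"
    proof
      fix w assume w: "w \<in> semigroup_gen G - Eset G n"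
      obtain x y where xy: "w = (x, y)" by (cases w)
      then obtain d where d: "x + y = d * N" "x \<in> ss A d" using w semi_char by blast
      then have yy: "y = d * N - x" by simp
      then have "(d, x) \<in> Pset n" using w xy E_char[OF d(2), of n] d(2) unfolding Pset_def by auto
      moreover have "w = psi (d, x)" unfolding psi_def xy yy by simp
      ultimately show "w \<in> psi ` Pset n" by blast
    qed
  qed
  show "card (semigroup_gen G - Eset G n) = card (Pset n)"
    using card_image[OF inj] img by simp
  show "finite (Pset n) \<Longrightarrow> finite (semigroup_gen G - Eset G n)"
    using img by (metis finite_imageI)
qed

end

definition T :: "nat \<Rightarrow> nat \<Rightarrow> nat \<Rightarrow> nat" where
  "T N X B = (\<Sum>m<B. X - m * N)"

lemma T_Suc: "T N X (Suc B) = T N X B + (X - B * N)"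
  unfolding T_def by simp

lemma T_stable: assumes "X \<le> B * N" "B \<le> B'" shows "T N X B' = T N X B"
  using assms(2)
proof (induction B' rule: dec_induct)
  case base then show ?case by simp
next
  case (step k)
  have "B * N \<le> k * N" using step.hyps(1) by (rule mult_le_mono1)
  then have "X - k * N = 0" using assms(1) by linarith
  then show ?case using step.IH by (simp add: T_Suc)
qed

lemma T_le: assumes "B \<le> B'" shows "T N X B \<le> T N X B'"
  using assms
proof (induction B' rule: dec_induct)
  case base then show ?case by simp
next
  case (step k)
  then show ?case by (simp add: T_Suc)
qed

lemma T_shift: "T N (X + N) (Suc B) = (X + N) + T N X B"
proof -
  have "T N (X + N) (Suc B) = (X + N - 0 * N) + (\<Sum>m<B. X + N - Suc m * N)"
    unfolding T_def by (rule sum.lessThan_Suc_shift)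
  also have "(\<Sum>m<B. X + N - Suc m * N) = T N X B" unfolding T_def by simp
  finally show ?thesis by simp
qed

definition F :: "nat \<Rightarrow> nat \<Rightarrow> nat" where "F N X = T N X X"

lemma F_shift: assumes "N \<ge> 1" shows "F N (X + N) = (X + N) + F N X"
proof -
  have "F N (X + N) = T N (X + N) (Suc X)"
    unfolding F_def using assms by (intro T_stable) (auto simp: algebra_simps)
  also have "\<dots> = (X + N) + F N X" unfolding F_def by (rule T_shift)
  finally show ?thesis .
qed

lemma F_small: assumes "N \<ge> 1" "X < N" shows "F N X = X"
proof (cases "X = 0")
  case True then show ?thesis by (simp add: F_def T_def)
next
  case False
  have "F N X = T N X (Suc 0)" unfolding F_def using assms False by (intro T_stable) auto
  also have "\<dots> = X" by (simp add: T_def)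
  finally show ?thesis .
qed

lemma F_bounds: assumes "N \<ge> 1"
  shows "X * X \<le> 2 * N * F N X \<and> 2 * N * F N X \<le> X * X + 2 * N * X"
proof (induction X rule: less_induct)
  case (less X)
  show ?case
  proof (cases "X < N")
    case True
    then have "F N X = X" using F_small assms by blast
    moreover have "X * X \<le> N * X" using True by (simp add: mult_le_mono1)
    moreover have "N * X \<le> 2 * N * X" by simp
    ultimately show ?thesis by (metis le_add2 le_trans)
  next
    case False
    define Y where "Y = X - N"
    have XY: "X = Y + N" using False Y_def by simp
    have "Y < X" using assms XY by simp
    then have IH: "Y * Y \<le> 2 * N * F N Y" "2 * N * F N Y \<le> Y * Y + 2 * N * Y" using less by auto
    have FX: "F N X = X + F N Y" using F_shift[OF assms, of Y] XY by simp
    have sq: "X * X = Y * Y + 2 * N * Y + N * N" unfolding XY by (simp add: algebra_simps)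
    have e2: "2 * N * F N X = 2 * N * X + 2 * N * F N Y" using FX by (simp add: algebra_simps)
    have e3: "2 * N * X = 2 * N * Y + 2 * N * N" unfolding XY by (simp add: algebra_simps)
    show ?thesis using IH sq e2 e3 by linarith
  qed
qed

lemma T_lower: assumes "N \<ge> 1" "X \<le> B * N" shows "X * X \<le> 2 * N * T N X B"
proof -
  have "T N X B = F N X"
  proof (cases "B \<le> X")
    case True then show ?thesis unfolding F_def using T_stable[OF assms(2) True] by simp
  next
    case False
    have "X \<le> X * N" using assms(1) by simp
    then show ?thesis unfolding F_def using T_stable[of X X N B] False by simp
  qed
  then show ?thesis using F_bounds[OF assms(1)] by simp
qed

lemma T_upper: assumes "N \<ge> 1" shows "2 * N * T N X B \<le> X * X + 2 * N * X"
proof -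
  have "T N X B \<le> F N X"
  proof (cases "B \<le> X")
    case True then show ?thesis unfolding F_def using T_le[OF True] by simp
  next
    case False
    have "X \<le> X * N" using assms(1) by simp
    then show ?thesis unfolding F_def using T_stable[of X X N B] False by simp
  qed
  then have "2 * N * T N X B \<le> 2 * N * F N X" by simp
  then show ?thesis using F_bounds[OF assms(1), of X] by linarith
qed

lemma step_find:
  fixes f :: "nat \<Rightarrow> nat"
  shows "f 0 \<le> x \<Longrightarrow> x < f p \<Longrightarrow> \<exists>r. 1 \<le> r \<and> r \<le> p \<and> f (r - 1) \<le> x \<and> x < f r"
proof (induction p)
  case 0 then show ?case by simp
next
  case (Suc p)
  show ?case
  proof (cases "x < f p")
    case True then show ?thesis using Suc by (metis le_SucI)
  next
    case False then show ?thesis using Suc.prems by (intro exI[of _ "Suc p"]) simp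
  qed
qed

locale hkset2 = hkset +
  fixes c m0 :: nat
  assumes strict: "\<And>i j. i < j \<Longrightarrow> j \<le> p \<Longrightarrow> a i < a j"
    and core: "\<And>m y. m0 \<le> m \<Longrightarrow> c \<le> y \<Longrightarrow> y + c \<le> m * N \<Longrightarrow> y \<in> ss A m"
begin

definition "mm = max m0 c"
definition "Bn n = n * N + 2 * c + 1"
definition "U0 n = (SIGMA d:{..<n + mm}. {..d * N})"
definition "U n r = (\<lambda>(m, x). (n + m, x)) ` (SIGMA m:{..<Bn n}. {n * a (r - 1) + m * N - c ..< n * a r + c})"
definition "Q0 n = (SIGMA d:{mm..<n}. {c ..< d * N + 1 - c})"
definition "Q n r = (\<lambda>(m, x). (n + m, x)) ` (SIGMA m:{..<Bn n}. {n * a (r - 1) + m * N + c + 1 ..< n * a r - c})"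

lemma A'0: "0 \<in> (\<lambda>b. N - b) ` A" by force

lemma upper_incl: "Pset n \<subseteq> U0 n \<union> (\<Union>r\<in>{1..p}. U n r)"
proof
  fix w assume w: "w \<in> Pset n"
  obtain d x where dx: "w = (d, x)" by (cases w)
  have xd: "x \<in> ss A d" using w dx unfolding Pset_def by auto
  have nc: "\<not> (n \<le> d \<and> (\<exists>r\<le>p. n * a r \<le> x \<and> x - n * a r \<in> ss A (d - n)))"
    using w dx unfolding Pset_def by auto
  have xdN: "x \<le> d * N" by (rule ss_le[OF A_sub xd])
  show "w \<in> U0 n \<union> (\<Union>r\<in>{1..p}. U n r)"
  proof (cases "d < n + mm")
    case True then show ?thesis using dx xdN unfolding U0_def by auto
  next
    case False
    define m where "m = d - n"
    have dm: "d = n + m" and mmm: "mm \<le> m" using False m_def by auto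
    have m0m: "m0 \<le> m" and cm: "c \<le> m" using mmm unfolding mm_def by auto
    have dN: "d * N = n * N + m * N" unfolding dm by (simp add: add_mult_distrib)
    have mmN: "m \<le> m * N" using Npos by simp
    have cov: "False" if "r \<le> p" "n * a r \<le> x" "x - n * a r \<in> ss A m" for r
      using nc that dm by auto
    have xc: "c \<le> x"
    proof (rule ccontr)
      assume "\<not> c \<le> x"
      then have "x \<le> m" using cm by simp
      then have "x \<in> ss A m" by (rule ss_small[OF A0 xd])
      then show False using cov[of 0] a0 by simp
    qed
    have xc2: "x + c \<le> d * N"
    proof (rule ccontr)
      assume as: "\<not> x + c \<le> d * N"
      define w where "w = d * N - x"
      have "w \<in> ss ((\<lambda>b. N - b) ` A) d" unfolding w_def by (rule ss_dual[OF A_sub xd])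
      moreover have "w \<le> m" unfolding w_def using as cm by linarith
      ultimately have wm: "w \<in> ss ((\<lambda>b. N - b) ` A) m" by (rule ss_small[OF A'0])
      have "n * N \<le> x" using as dN cm mmN by linarith
      moreover have "m * N - (x - n * N) = w" unfolding w_def using dN \<open>n * N \<le> x\<close> xdN by linarith
      moreover have "x - n * N \<le> m * N" using dN xdN by linarith
      ultimately have "x - n * N \<in> ss A m" using ss_dual_conv[OF A_sub _ ] wm by metis
      then show False using cov[of p] \<open>n * N \<le> x\<close> by simp
    qed
    have xc3: "x < n * a p + c"
    proof (rule ccontr)
      assume as: "\<not> x < n * a p + c"
      then have "x - n * N \<in> ss A m" using xc2 dN by (intro core[OF m0m]) linarith+
      then show False using cov[of p] as by simp
    qed
    obtain r where r: "1 \<le> r" "r \<le> p" "n * a (r - 1) + c \<le> x" "x < n * a r + c"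
      using step_find[of "\<lambda>r. n * a r + c" x p] xc xc3 a0 by auto
    have xc4: "n * a (r - 1) + m * N < x + c"
    proof (rule ccontr)
      assume as: "\<not> n * a (r - 1) + m * N < x + c"
      then have "x - n * a (r - 1) \<in> ss A m" using r(3) by (intro core[OF m0m]) linarith+
      moreover have "r - 1 \<le> p" using r by simp
      moreover have "n * a (r - 1) \<le> x" using r(3) by simp
      ultimately show False using cov[of "r - 1"] by blast
    qed
    have "n * a r \<le> n * N" using mono r(2) by simp
    then have "m * N < n * N + 2 * c" using xc4 r(4) by linarith
    then have mB: "m < Bn n" unfolding Bn_def using mmN by linarith
    have "(m, x) \<in> (SIGMA m:{..<Bn n}. {n * a (r - 1) + m * N - c ..< n * a r + c})"
      using mB xc4 r(4) by auto
    then have wU: "w \<in> U n r" unfolding U_def dx dm by force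
    have "r \<in> {1..p}" using r by simp
    then have "w \<in> (\<Union>r\<in>{1..p}. U n r)" using wU by (rule UN_I)
    then show ?thesis by (rule UnI2)
  qed
qed

lemma fin_U0: "finite (U0 n)" unfolding U0_def by auto
lemma fin_U: "finite (U n r)" unfolding U_def by auto
lemma fin_Q0: "finite (Q0 n)" unfolding Q0_def by auto
lemma fin_Q: "finite (Q n r)" unfolding Q_def by auto

lemma fin_P: "finite (Pset n)"
  using upper_incl fin_U0 fin_U by (meson finite_UN_I finite_Un finite_atLeastAtMost finite_subset)

lemma lower_incl:
  assumes n: "mm \<le> n"
  shows "Q0 n \<union> (\<Union>r\<in>{1..p}. Q n r) \<subseteq> Pset n"
proof
  fix w assume w: "w \<in> Q0 n \<union> (\<Union>r\<in>{1..p}. Q n r)"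
  show "w \<in> Pset n"
  proof (cases "w \<in> Q0 n")
    case True
    then obtain d x where dx: "w = (d, x)" "mm \<le> d" "d < n" "c \<le> x" "x < d * N + 1 - c"
      unfolding Q0_def by auto
    have "x \<in> ss A d" using dx by (intro core) (auto simp: mm_def)
    then show ?thesis using dx unfolding Pset_def by auto
  next
    case False
    then obtain r where r: "1 \<le> r" "r \<le> p" "w \<in> Q n r" using w by auto
    then obtain m x where mx: "w = (n + m, x)" "m < Bn n" "n * a (r - 1) + m * N + c + 1 \<le> x" "x < n * a r - c"
      unfolding Q_def by auto
    have "n * a r \<le> n * N" using mono r(2) by simp
    moreover have dN: "(n + m) * N = n * N + m * N" by (simp add: add_mult_distrib)
    ultimately have "x + c \<le> (n + m) * N" using mx(4) by linarith
    then have "x \<in> ss A (n + m)" using mx n by (intro core) (auto simp: mm_def)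
    moreover have "\<not> (n * a j \<le> x \<and> x - n * a j \<in> ss A m)" if j: "j \<le> p" for j
    proof
      assume as: "n * a j \<le> x \<and> x - n * a j \<in> ss A m"
      then have le: "x - n * a j \<le> m * N" using ss_le[OF A_sub] by blast
      show False
      proof (cases "r \<le> j")
        case True
        then have "n * a r \<le> n * a j" using mono j by simp
        then show False using as mx(4) by linarith
      next
        case False
        then have "n * a j \<le> n * a (r - 1)" using mono r by simp
        then show False using le mx(3) as by linarith
      qed
    qed
    ultimately show ?thesis using mx(1) unfolding Pset_def by auto
  qed
qed

lemma Q_mem: "w \<in> Q n r \<Longrightarrow> \<exists>m x. w = (n + m, x) \<and> m < Bn n \<and> n * a (r - 1) + m * N + c + 1 \<le> x \<and> x < n * a r - c"
  unfolding Q_def by auto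

lemma Q0_mem: "w \<in> Q0 n \<Longrightarrow> fst w < n"
  unfolding Q0_def by auto

lemma disj_Q:
  assumes "r \<in> {1..p}" "r' \<in> {1..p}" "r \<noteq> r'"
  shows "Q n r \<inter> Q n r' = {}"
proof -
  have *: "Q n r \<inter> Q n r' = {}" if "r < r'" "r' \<le> p" for r r'
  proof -
    have le: "n * a r \<le> n * a (r' - 1)" using mono that by simp
    show ?thesis
    proof (rule ccontr)
      assume "Q n r \<inter> Q n r' \<noteq> {}"
      then obtain w where w: "w \<in> Q n r" "w \<in> Q n r'" by blast
      from Q_mem[OF w(1)] obtain m x where A: "w = (n + m, x)" "m < Bn n" "n * a (r - 1) + m * N + c + 1 \<le> x" "x < n * a r - c" by (elim exE conjE)
      from Q_mem[OF w(2)] obtain m' x' where B: "w = (n + m', x')" "m' < Bn n" "n * a (r' - 1) + m' * N + c + 1 \<le> x'" "x' < n * a r' - c" by (elim exE conjE)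
      have "x = x'" using A(1) B(1) by simp
      then show False using A(4) B(3) le by linarith
    qed
  qed
  show ?thesis
  proof (cases "r < r'")
    case True then show ?thesis using *[of r r'] assms(2) by simp
  next
    case False then have "r' < r" using assms by simp
    then show ?thesis using *[of r' r] assms(1) by (simp add: Int_commute)
  qed
qed

lemma disj_Q0: "Q0 n \<inter> (\<Union>r\<in>{1..p}. Q n r) = {}"
proof (rule ccontr)
  assume "Q0 n \<inter> (\<Union>r\<in>{1..p}. Q n r) \<noteq> {}"
  then obtain w r where "w \<in> Q0 n" "w \<in> Q n r" by blast
  from Q0_mem[OF this(1)] Q_mem[OF this(2)] show False by auto
qed

lemma card_Q0: "card (Q0 n) = (\<Sum>d\<in>{mm..<n}. d * N + 1 - c - c)"
  unfolding Q0_def by (subst card_SigmaI) auto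

lemma inj_shift: "inj_on (\<lambda>(m, x). (n + m, x)) (X :: (nat \<times> nat) set)"
  by (rule inj_onI) auto

lemma card_Q: "card (Q n r) = (\<Sum>m<Bn n. n * a r - c - (n * a (r - 1) + m * N + c + 1))"
  unfolding Q_def by (subst card_image[OF inj_shift]) (subst card_SigmaI, auto)

lemma card_U0: "card (U0 n) = (\<Sum>d<n + mm. d * N + 1)"
  unfolding U0_def by (subst card_SigmaI) auto

lemma card_U: "card (U n r) \<le> (\<Sum>m<Bn n. n * a r + c - (n * a (r - 1) + m * N - c))"
proof -
  have "card (U n r) \<le> card (SIGMA m:{..<Bn n}. {n * a (r - 1) + m * N - c ..< n * a r + c})"
    unfolding U_def by (rule card_image_le) auto
  also have "\<dots> = (\<Sum>m<Bn n. n * a r + c - (n * a (r - 1) + m * N - c))"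
    by (subst card_SigmaI) auto
  finally show ?thesis .
qed

lemma LB:
  assumes "mm \<le> n"
  shows "(\<Sum>d\<in>{mm..<n}. d * N + 1 - c - c) + (\<Sum>r\<in>{1..p}. T N (n * a r - n * a (r - 1) - (2 * c + 1)) (Bn n))
    \<le> card (Pset n)"
proof -
  have "card (Q n r) = T N (n * a r - n * a (r - 1) - (2 * c + 1)) (Bn n)" if "r \<in> {1..p}" for r
  proof -
    have "n * a (r - 1) \<le> n * a r" using mono that by simp
    then show ?thesis unfolding card_Q T_def by (intro sum.cong) auto
  qed
  then have "(\<Sum>r\<in>{1..p}. T N (n * a r - n * a (r - 1) - (2 * c + 1)) (Bn n)) = card (\<Union>r\<in>{1..p}. Q n r)"
    by (subst card_UN_disjoint) (auto simp: fin_Q disj_Q)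
  moreover have "card (Q0 n \<union> (\<Union>r\<in>{1..p}. Q n r)) = card (Q0 n) + card (\<Union>r\<in>{1..p}. Q n r)"
    by (rule card_Un_disjoint[OF fin_Q0 _ disj_Q0]) (auto simp: fin_Q)
  moreover have "card (Q0 n \<union> (\<Union>r\<in>{1..p}. Q n r)) \<le> card (Pset n)"
    by (rule card_mono[OF fin_P lower_incl[OF assms]])
  ultimately show ?thesis unfolding card_Q0 by simp
qed

lemma UB:
  "card (Pset n) \<le> (\<Sum>d<n + mm. d * N + 1) + (\<Sum>r\<in>{1..p}. T N (n * a r - n * a (r - 1) + 2 * c) (Bn n))"
proof -
  have "card (U n r) \<le> T N (n * a r - n * a (r - 1) + 2 * c) (Bn n)" if "r \<in> {1..p}" for r
  proof -
    have "n * a (r - 1) \<le> n * a r" using mono that by simp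
    then have "(\<Sum>m<Bn n. n * a r + c - (n * a (r - 1) + m * N - c)) \<le> T N (n * a r - n * a (r - 1) + 2 * c) (Bn n)"
      unfolding T_def by (intro sum_mono) auto
    then show ?thesis using card_U le_trans by blast
  qed
  have "card (Pset n) \<le> card (U0 n \<union> (\<Union>r\<in>{1..p}. U n r))"
    by (rule card_mono[OF _ upper_incl]) (auto simp: fin_U0 fin_U)
  also have "\<dots> \<le> card (U0 n) + card (\<Union>r\<in>{1..p}. U n r)" by (rule card_Un_le)
  also have "card (\<Union>r\<in>{1..p}. U n r) \<le> (\<Sum>r\<in>{1..p}. card (U n r))" by (rule card_UN_le) simp
  also have "\<dots> \<le> (\<Sum>r\<in>{1..p}. T N (n * a r - n * a (r - 1) + 2 * c) (Bn n))"
    by (rule sum_mono) (use \<open>\<And>r. r \<in> {1..p} \<Longrightarrow> card (U n r) \<le> _\<close> in blast)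
  finally show ?thesis unfolding card_U0 by simp
qed

end

lemma sum_real_lessThan: "(\<Sum>d<n. real d) = real n * (real n - 1) / 2"
  by (induction n) (auto simp: algebra_simps)

context hkset2
begin

definition "dl r = a r - a (r - 1)"
definition "Dsum = (\<Sum>r\<in>{1..p}. real (dl r) ^ 2)"
definition "ee = real N / 2 + Dsum / (2 * real N)"

lemma dl_mult: "r \<le> p \<Longrightarrow> n * a r - n * a (r - 1) = n * dl r"
  unfolding dl_def by (simp add: diff_mult_distrib2)

lemma dl_pos: "1 \<le> r \<Longrightarrow> r \<le> p \<Longrightarrow> 1 \<le> dl r"
  unfolding dl_def using strict[of "r - 1" r] by simp

lemma dl_le: "1 \<le> r \<Longrightarrow> r \<le> p \<Longrightarrow> dl r \<le> N"
  unfolding dl_def using mono[of r p] by simp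

lemma Nr: "real N \<ge> 1" using Npos by simp

lemma T_low_real:
  assumes "X \<le> B * N"
  shows "real X ^ 2 / (2 * real N) \<le> real (T N X B)"
proof -
  have "X * X \<le> 2 * N * T N X B" by (rule T_lower[OF Npos assms])
  then have "real X ^ 2 \<le> 2 * real N * real (T N X B)"
    by (metis of_nat_le_iff of_nat_mult of_nat_numeral power2_eq_square)
  then show ?thesis using Nr by (simp add: field_simps)
qed

lemma T_up_real:
  shows "real (T N X B) \<le> real X ^ 2 / (2 * real N) + real X"
proof -
  have "2 * N * T N X B \<le> X * X + 2 * N * X" by (rule T_upper[OF Npos])
  then have "2 * real N * real (T N X B) \<le> real X ^ 2 + 2 * real N * real X"
    by (metis (mono_tags) of_nat_add of_nat_le_iff of_nat_mult of_nat_numeral power2_eq_square)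
  then show ?thesis using Nr by (simp add: field_simps)
qed

lemma lower_r:
  assumes r: "1 \<le> r" "r \<le> p" and n: "2 * c + 1 \<le> n"
  shows "real n ^ 2 * real (dl r) ^ 2 / (2 * real N) - (2 * real c + 1) * real n
    \<le> real (T N (n * a r - n * a (r - 1) - (2 * c + 1)) (Bn n))"
proof -
  define X where "X = n * dl r - (2 * c + 1)"
  have "n \<le> n * dl r" using dl_pos[OF r] by simp
  then have h: "2 * c + 1 \<le> n * dl r" using n by linarith
  have "real X = real (n * dl r) - real (2 * c + 1)" unfolding X_def using h by (rule of_nat_diff)
  then have Xr: "real X = real n * real (dl r) - (2 * real c + 1)" by simp
  have "X \<le> n * N" unfolding X_def using dl_le[OF r] by (meson diff_le_self le_trans mult_le_mono2)
  also have "\<dots> \<le> Bn n * N"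
  proof -
    have "n * N * 1 \<le> n * N * N" using Npos by (rule mult_le_mono2)
    then have "n * N \<le> n * N * N" by simp
    moreover have "Bn n * N = n * N * N + (2 * c + 1) * N" unfolding Bn_def by (simp add: add_mult_distrib)
    ultimately show ?thesis by linarith
  qed
  finally have XB: "X \<le> Bn n * N" .
  have low: "real X ^ 2 / (2 * real N) \<le> real (T N X (Bn n))" by (rule T_low_real[OF XB])
  define y where "y = real n * real (dl r)"
  define k where "k = 2 * real c + 1"
  have "real X ^ 2 = (y - k) ^ 2" unfolding Xr y_def k_def ..
  also have "\<dots> \<ge> y ^ 2 - 2 * k * y" by (simp add: power2_eq_square algebra_simps)
  finally have s1: "y ^ 2 - 2 * k * y \<le> real X ^ 2" .
  have "y \<le> real n * real N" unfolding y_def using dl_le[OF r] by (simp add: mult_left_mono)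
  then have "2 * k * y \<le> 2 * k * (real n * real N)" unfolding k_def by (simp add: mult_left_mono)
  then have "y ^ 2 - 2 * k * (real n * real N) \<le> real X ^ 2" using s1 by linarith
  then have "(y ^ 2 - 2 * k * (real n * real N)) / (2 * real N) \<le> real X ^ 2 / (2 * real N)"
    using Nr by (simp add: divide_right_mono)
  moreover have "(y ^ 2 - 2 * k * (real n * real N)) / (2 * real N) = y ^ 2 / (2 * real N) - k * real n"
    using Nr by (simp add: field_simps)
  ultimately have "y ^ 2 / (2 * real N) - k * real n \<le> real (T N X (Bn n))" using low by linarith
  moreover have "y ^ 2 = real n ^ 2 * real (dl r) ^ 2" unfolding y_def by (simp add: power_mult_distrib)
  moreover have "n * a r - n * a (r - 1) - (2 * c + 1) = X" unfolding X_def using dl_mult[OF r(2)] by simp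
  ultimately show ?thesis unfolding k_def by simp
qed

lemma upper_r:
  assumes r: "1 \<le> r" "r \<le> p"
  shows "real (T N (n * a r - n * a (r - 1) + 2 * c) (Bn n))
    \<le> real n ^ 2 * real (dl r) ^ 2 / (2 * real N) + (2 * real c + real N) * real n + (2 * real c ^ 2 + 2 * real c)"
proof -
  define Y where "Y = n * dl r + 2 * c"
  have eqY: "n * a r - n * a (r - 1) + 2 * c = Y" unfolding Y_def using dl_mult[OF r(2)] by simp
  have up: "real (T N Y (Bn n)) \<le> real Y ^ 2 / (2 * real N) + real Y" by (rule T_up_real)
  define y where "y = real n * real (dl r)"
  have yN: "y \<le> real n * real N" unfolding y_def using dl_le[OF r] by (simp add: mult_left_mono)
  have y0: "0 \<le> y" unfolding y_def by simp
  have Yr: "real Y = y + 2 * real c" unfolding Y_def y_def by simp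
  have "real Y ^ 2 = y ^ 2 + 4 * real c * y + 4 * real c ^ 2" unfolding Yr by (simp add: power2_eq_square algebra_simps)
  also have "\<dots> \<le> y ^ 2 + 4 * real c * (real n * real N) + 4 * real c ^ 2"
    using yN by (simp add: mult_left_mono)
  finally have "real Y ^ 2 / (2 * real N) \<le> (y ^ 2 + 4 * real c * (real n * real N) + 4 * real c ^ 2) / (2 * real N)"
    using Nr by (simp add: divide_right_mono)
  also have "\<dots> = y ^ 2 / (2 * real N) + 2 * real c * real n + 2 * real c ^ 2 / real N"
    using Nr by (simp add: field_simps)
  also have "\<dots> \<le> y ^ 2 / (2 * real N) + 2 * real c * real n + 2 * real c ^ 2"
  proof -
    have "2 * real c ^ 2 / real N \<le> 2 * real c ^ 2" using Nr
      by (simp add: divide_le_eq mult_le_cancel_left1)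
    then show ?thesis by simp
  qed
  finally have A: "real Y ^ 2 / (2 * real N) \<le> y ^ 2 / (2 * real N) + 2 * real c * real n + 2 * real c ^ 2" .
  have B: "real Y \<le> real N * real n + 2 * real c" using Yr yN by (simp add: mult.commute)
  have "y ^ 2 = real n ^ 2 * real (dl r) ^ 2" unfolding y_def by (simp add: power_mult_distrib)
  then show ?thesis unfolding eqY using up A B by (simp add: algebra_simps)
qed

end

context hkset2
begin

lemma S1_low:
  assumes "mm \<le> n"
  shows "real N * real n ^ 2 / 2 - (real N / 2 + 2 * real c) * real n - real mm * real mm * real N
    \<le> real (\<Sum>d\<in>{mm..<n}. d * N + 1 - c - c)"
proof -
  define g where "g d = real d * real N - 2 * real c" for d
  have t: "g d \<le> real (d * N + 1 - c - c)" for d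
  proof (cases "c + c \<le> d * N + 1")
    case True
    then have "real (d * N + 1 - c - c) = real (d * N + 1) - real (c + c)" by (simp add: of_nat_diff)
    then show ?thesis unfolding g_def by simp
  next
    case False
    then have "d * N \<le> 2 * c" by simp
    then have "real (d * N) \<le> real (2 * c)" by (rule of_nat_mono)
    then show ?thesis unfolding g_def by simp
  qed
  have "(\<Sum>d\<in>{mm..<n}. g d) \<le> real (\<Sum>d\<in>{mm..<n}. d * N + 1 - c - c)"
    unfolding of_nat_sum by (rule sum_mono) (rule t)
  moreover have split: "(\<Sum>d<n. g d) = (\<Sum>d<mm. g d) + (\<Sum>d\<in>{mm..<n}. g d)"
    using sum.atLeastLessThan_concat[of 0 mm n g] assms by (simp add: atLeast0LessThan)
  moreover have "(\<Sum>d<n. g d) = real N * (real n * (real n - 1) / 2) - 2 * real c * real n"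
    unfolding g_def by (simp add: sum_subtractf sum_distrib_right[symmetric] sum_real_lessThan algebra_simps)
  moreover have "(\<Sum>d<mm. g d) \<le> (\<Sum>d<mm. real mm * real N)"
    unfolding g_def
  proof (rule sum_mono)
    fix d assume "d \<in> {..<mm}"
    then have "real d * real N \<le> real mm * real N" by (intro mult_right_mono) auto
    then show "real d * real N - 2 * real c \<le> real mm * real N" by simp
  qed
  moreover have "(\<Sum>d<mm. real mm * real N) = real mm * real mm * real N" by simp
  moreover have "real N * real n ^ 2 / 2 - (real N / 2 + 2 * real c) * real n - real mm * real mm * real N
     = real N * (real n * (real n - 1) / 2) - 2 * real c * real n - real mm * real mm * real N"
    by (simp add: algebra_simps power2_eq_square)
  ultimately show ?thesis by linarith
qed

lemma lower_total:
  assumes n: "mm \<le> n" "2 * c + 1 \<le> n"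
  shows "ee * real n ^ 2 - (real N / 2 + 2 * real c + real p * (2 * real c + 1)) * real n - real mm * real mm * real N
    \<le> real (card (Pset n))"
proof -
  have LBr: "real (\<Sum>d\<in>{mm..<n}. d * N + 1 - c - c) + (\<Sum>r\<in>{1..p}. real (T N (n * a r - n * a (r - 1) - (2 * c + 1)) (Bn n)))
    \<le> real (card (Pset n))"
  proof -
    have "real ((\<Sum>d\<in>{mm..<n}. d * N + 1 - c - c) + (\<Sum>r\<in>{1..p}. T N (n * a r - n * a (r - 1) - (2 * c + 1)) (Bn n)))
      \<le> real (card (Pset n))" using LB[OF n(1)] by (rule of_nat_mono)
    then show ?thesis by (simp only: of_nat_add of_nat_sum)
  qed
  have "(\<Sum>r\<in>{1..p}. real n ^ 2 * real (dl r) ^ 2 / (2 * real N) - (2 * real c + 1) * real n)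
    \<le> (\<Sum>r\<in>{1..p}. real (T N (n * a r - n * a (r - 1) - (2 * c + 1)) (Bn n)))"
    by (rule sum_mono) (rule lower_r, use n(2) in auto)
  moreover have "(\<Sum>r\<in>{1..p}. real n ^ 2 * real (dl r) ^ 2 / (2 * real N) - (2 * real c + 1) * real n)
    = real n ^ 2 * Dsum / (2 * real N) - real p * (2 * real c + 1) * real n"
    unfolding Dsum_def by (simp add: sum_subtractf sum_divide_distrib[symmetric] sum_distrib_left[symmetric])
  moreover have "ee * real n ^ 2 = real N * real n ^ 2 / 2 + real n ^ 2 * Dsum / (2 * real N)"
    unfolding ee_def by (simp add: algebra_simps)
  moreover have "(real N / 2 + 2 * real c + real p * (2 * real c + 1)) * real n
     = (real N / 2 + 2 * real c) * real n + real p * (2 * real c + 1) * real n"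
    by (simp add: algebra_simps)
  ultimately show ?thesis using S1_low[OF n(1)] LBr by linarith
qed

lemma upper_total:
  shows "real (card (Pset n)) \<le> ee * real n ^ 2
    + (real N * real mm + 1 + real p * (2 * real c + real N)) * real n
    + (real N * real mm ^ 2 / 2 + real mm + real p * (2 * real c ^ 2 + 2 * real c))"
proof -
  have UBr: "real (card (Pset n)) \<le> real (\<Sum>d<n + mm. d * N + 1) + (\<Sum>r\<in>{1..p}. real (T N (n * a r - n * a (r - 1) + 2 * c) (Bn n)))"
  proof -
    have "real (card (Pset n)) \<le> real ((\<Sum>d<n + mm. d * N + 1) + (\<Sum>r\<in>{1..p}. T N (n * a r - n * a (r - 1) + 2 * c) (Bn n)))"
      using UB[of n] by (rule of_nat_mono)
    then show ?thesis by (simp only: of_nat_add of_nat_sum)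
  qed
  have "(\<Sum>r\<in>{1..p}. real (T N (n * a r - n * a (r - 1) + 2 * c) (Bn n)))
    \<le> (\<Sum>r\<in>{1..p}. real n ^ 2 * real (dl r) ^ 2 / (2 * real N) + (2 * real c + real N) * real n + (2 * real c ^ 2 + 2 * real c))"
    by (rule sum_mono) (rule upper_r, auto)
  moreover have "(\<Sum>r\<in>{1..p}. real n ^ 2 * real (dl r) ^ 2 / (2 * real N) + (2 * real c + real N) * real n + (2 * real c ^ 2 + 2 * real c))
    = real n ^ 2 * Dsum / (2 * real N) + real p * ((2 * real c + real N) * real n + (2 * real c ^ 2 + 2 * real c))"
    unfolding Dsum_def by (simp add: sum.distrib sum_divide_distrib[symmetric] sum_distrib_left[symmetric] distrib_left)
  moreover have "real (\<Sum>d<n + mm. d * N + 1) = real N * (real (n + mm) * (real (n + mm) - 1) / 2) + real (n + mm)"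
    by (simp add: of_nat_sum sum.distrib sum_distrib_right[symmetric] sum_real_lessThan[of "n + mm"] algebra_simps)
  moreover have "real N * (real (n + mm) * (real (n + mm) - 1) / 2) \<le> real N * (real (n + mm) ^ 2 / 2)"
    by (intro mult_left_mono) (auto simp: power2_eq_square algebra_simps)
  moreover have "real N * (real (n + mm) ^ 2 / 2) = real N * real n ^ 2 / 2 + real N * real mm * real n + real N * real mm ^ 2 / 2"
    by (simp add: power2_eq_square algebra_simps)
  moreover have "ee * real n ^ 2 = real N * real n ^ 2 / 2 + real n ^ 2 * Dsum / (2 * real N)"
    unfolding ee_def by (simp add: algebra_simps)
  moreover have "(real N * real mm + 1 + real p * (2 * real c + real N)) * real n
    + (real N * real mm ^ 2 / 2 + real mm + real p * (2 * real c ^ 2 + 2 * real c))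
    = real N * real mm * real n + real N * real mm ^ 2 / 2 + (real n + real mm)
      + real p * ((2 * real c + real N) * real n + (2 * real c ^ 2 + 2 * real c))"
    by (simp add: algebra_simps)
  moreover have "real (n + mm) = real n + real mm" by simp
  ultimately show ?thesis using UBr by linarith
qed

end

lemma strict_from:
  fixes n :: "nat \<Rightarrow> nat"
  assumes "n 1 > 0" "\<And>r. 1 \<le> r \<Longrightarrow> r < p \<Longrightarrow> n r < n (r + 1)" "n 0 = 0"
  shows "i < j \<Longrightarrow> j \<le> p \<Longrightarrow> n i < n j"
proof (induction j)
  case 0 then show ?case by simp
next
  case (Suc j)
  have step: "n j < n (Suc j)"
  proof (cases "j = 0")
    case True then show ?thesis using assms(1,3) by simp
  next
    case False then show ?thesis using assms(2)[of j] Suc.prems by simp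
  qed
  show ?case
  proof (cases "i = j")
    case True then show ?thesis using step by simp
  next
    case False then have "n i < n j" using Suc by simp
    then show ?thesis using step by simp
  qed
qed

lemma ee_identity:
  fixes a :: "nat \<Rightarrow> nat"
  assumes mono: "\<And>i j. i \<le> j \<Longrightarrow> j \<le> p \<Longrightarrow> a i \<le> a j" and a0: "a 0 = 0" and Np: "a p \<ge> 1"
  shows "real (a p) / 2 + (\<Sum>r\<in>{1..p}. real (a r - a (r - 1)) ^ 2) / (2 * real (a p))
    = 1 + (1 / real (a p)) * (\<Sum>r=1..p. (real (a r) - 1) * (real (a r) - real (a (r - 1))))"
proof -
  define f where "f r = real (a r)" for r
  define N where "N = f p"
  have N1: "N \<ge> 1" unfolding N_def f_def using Np by simp
  have dl: "real (a r - a (r - 1)) = f r - f (r - 1)" if "r \<in> {1..p}" for r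
    unfolding f_def using mono[of "r - 1" r] that by (simp add: of_nat_diff)
  have tel1: "(\<Sum>r\<in>{1..p}. f r - f (r - 1)) = N"
    using sum_telescope''[of 0 p f] a0 unfolding N_def f_def by simp
  have tel2: "(\<Sum>r\<in>{1..p}. f r ^ 2 - f (r - 1) ^ 2) = N ^ 2"
    using sum_telescope''[of 0 p "\<lambda>r. f r ^ 2"] a0 unfolding N_def f_def by simp
  have key: "(f r - 1) * (f r - f (r - 1)) = (f r ^ 2 - f (r - 1) ^ 2) / 2 + (f r - f (r - 1)) ^ 2 / 2 - (f r - f (r - 1))" for r
    by (simp add: power2_eq_square field_simps)
  have "(\<Sum>r=1..p. (real (a r) - 1) * (real (a r) - real (a (r - 1))))
      = (\<Sum>r\<in>{1..p}. (f r ^ 2 - f (r - 1) ^ 2) / 2 + (f r - f (r - 1)) ^ 2 / 2 - (f r - f (r - 1)))"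
    unfolding f_def[symmetric] using key by simp
  also have "\<dots> = N ^ 2 / 2 + (\<Sum>r\<in>{1..p}. (f r - f (r - 1)) ^ 2) / 2 - N"
  proof -
    define A where "A r = f r ^ 2 - f (r - 1) ^ 2" for r
    define B where "B r = (f r - f (r - 1)) ^ 2" for r
    define C where "C r = f r - f (r - 1)" for r
    have "(\<Sum>r\<in>{1..p}. A r / 2 + B r / 2 - C r) = (\<Sum>r\<in>{1..p}. A r) / 2 + (\<Sum>r\<in>{1..p}. B r) / 2 - (\<Sum>r\<in>{1..p}. C r)"
      by (simp only: sum_subtractf sum.distrib sum_divide_distrib)
    then show ?thesis unfolding A_def B_def C_def tel1 tel2 .
  qed
  finally have S: "(\<Sum>r=1..p. (real (a r) - 1) * (real (a r) - real (a (r - 1)))) = N ^ 2 / 2 + (\<Sum>r\<in>{1..p}. (f r - f (r - 1)) ^ 2) / 2 - N" .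
  have D: "(\<Sum>r\<in>{1..p}. real (a r - a (r - 1)) ^ 2) = (\<Sum>r\<in>{1..p}. (f r - f (r - 1)) ^ 2)"
    by (rule sum.cong[OF refl]) (simp only: dl)
  show ?thesis unfolding S D unfolding N_def[symmetric] f_def[symmetric]
    using N1 by (simp add: field_simps power2_eq_square)
qed

lemma lim_sq0: "(\<lambda>m::nat. K / real m ^ 2) \<longlonglongrightarrow> (0::real)"
proof -
  have "(\<lambda>m::nat. (K / real m) * (1 / real m)) \<longlonglongrightarrow> 0 * 0"
    by (intro tendsto_mult lim_const_over_n)
  moreover have "(\<lambda>m::nat. (K / real m) * (1 / real m)) = (\<lambda>m. K / real m ^ 2)"
    by (simp add: power2_eq_square)
  ultimately show ?thesis by simp
qed

context hkset2
begin

lemma lim_P: "(\<lambda>m. real (card (Pset m)) / real m ^ 2) \<longlonglongrightarrow> ee"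
proof -
  define C1 where "C1 = real N / 2 + 2 * real c + real p * (2 * real c + 1)"
  define C0 where "C0 = real mm * real mm * real N"
  define D1 where "D1 = real N * real mm + 1 + real p * (2 * real c + real N)"
  define D0 where "D0 = real N * real mm ^ 2 / 2 + real mm + real p * (2 * real c ^ 2 + 2 * real c)"
  define n1 where "n1 = max (max mm (2 * c + 1)) 1"
  have ev1: "\<forall>\<^sub>F m in sequentially. ee - C1 / real m - C0 / real m ^ 2 \<le> real (card (Pset m)) / real m ^ 2"
    unfolding eventually_sequentially
  proof (intro exI[of _ n1] allI impI)
    fix m assume m: "n1 \<le> m"
    then have m1: "real m > 0" unfolding n1_def by simp
    have "ee * real m ^ 2 - C1 * real m - C0 \<le> real (card (Pset m))"
      unfolding C1_def C0_def by (rule lower_total) (use m in \<open>auto simp: n1_def\<close>)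
    then have "(ee * real m ^ 2 - C1 * real m - C0) / real m ^ 2 \<le> real (card (Pset m)) / real m ^ 2"
      by (rule divide_right_mono) simp
    moreover have "(ee * real m ^ 2 - C1 * real m - C0) / real m ^ 2 = ee - C1 / real m - C0 / real m ^ 2"
      using m1 by (simp add: field_simps power2_eq_square)
    ultimately show "ee - C1 / real m - C0 / real m ^ 2 \<le> real (card (Pset m)) / real m ^ 2" by simp
  qed
  have ev2: "\<forall>\<^sub>F m in sequentially. real (card (Pset m)) / real m ^ 2 \<le> ee + D1 / real m + D0 / real m ^ 2"
    unfolding eventually_sequentially
  proof (intro exI[of _ 1] allI impI)
    fix m :: nat assume m: "1 \<le> m"
    then have m1: "real m > 0" by simp
    have "real (card (Pset m)) \<le> ee * real m ^ 2 + D1 * real m + D0"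
      unfolding D1_def D0_def by (rule upper_total)
    then have "real (card (Pset m)) / real m ^ 2 \<le> (ee * real m ^ 2 + D1 * real m + D0) / real m ^ 2"
      by (rule divide_right_mono) simp
    moreover have "(ee * real m ^ 2 + D1 * real m + D0) / real m ^ 2 = ee + D1 / real m + D0 / real m ^ 2"
      using m1 by (simp add: field_simps power2_eq_square)
    ultimately show "real (card (Pset m)) / real m ^ 2 \<le> ee + D1 / real m + D0 / real m ^ 2" by simp
  qed
  have l1: "(\<lambda>m::nat. ee - C1 / real m - C0 / real m ^ 2) \<longlonglongrightarrow> ee - 0 - 0"
    by (intro tendsto_diff tendsto_const lim_const_over_n lim_sq0)
  have l2: "(\<lambda>m::nat. ee + D1 / real m + D0 / real m ^ 2) \<longlonglongrightarrow> ee + 0 + 0"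
    by (intro tendsto_add tendsto_const lim_const_over_n lim_sq0)
  have l1': "(\<lambda>m::nat. ee - C1 / real m - C0 / real m ^ 2) \<longlonglongrightarrow> ee" using l1 by simp
  have l2': "(\<lambda>m::nat. ee + D1 / real m + D0 / real m ^ 2) \<longlonglongrightarrow> ee" using l2 by simp
  show ?thesis by (rule tendsto_sandwich[OF ev1 ev2 l1' l2'])
qed

end

theorem theorem5p1:
  fixes p :: nat and n :: "nat \<Rightarrow> nat"
  assumes "p \<ge> 1"
    and "n 1 > 0"
    and "\<And>r. 1 \<le> r \<Longrightarrow> r < p \<Longrightarrow> n r < n (r + 1)"
    and "Gcd (n ` {1..p}) = 1"
    and "n 0 = 0"
  shows "has_ehk TYPE('k::field) {(n r, n p - n r) | r. r \<le> p}
           (1 + (1 / real (n p)) * (\<Sum>r=1..p. (real (n r) - 1) * (real (n r) - real (n (r - 1)))))"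
proof -
  have strict: "\<And>i j. i < j \<Longrightarrow> j \<le> p \<Longrightarrow> n i < n j"
    using strict_from[of n p] assms(2,3,5) by blast
  have mono: "\<And>i j. i \<le> j \<Longrightarrow> j \<le> p \<Longrightarrow> n i \<le> n j"
    using strict by (metis le_eq_less_or_eq)
  have Np: "n p \<ge> 1" using mono[of 1 p] assms(1,2) by simp
  interpret H: hkset n p using mono assms(5) Np by unfold_locales auto
  have X: "inH H.A x" if "x \<in> n ` {1..p}" for x
  proof -
    have "x \<in> H.A" using that by auto
    then have "x \<in> ss H.A 1" by (rule ss_one)
    then show ?thesis unfolding inH_def by blast
  qed
  obtain u v where uv: "inH H.A u" "inH H.A v" "u = v + 1"
    using gcd_uv[OF finite_imageI[OF finite_atLeastAtMost] assms(4) X] by blast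
  obtain c m0 where core: "\<forall>m y. m0 \<le> m \<longrightarrow> c \<le> y \<longrightarrow> y + c \<le> m * n p \<longrightarrow> y \<in> ss H.A m"
    using core[OF H.A_sub H.A0 H.AN Np uv] by blast
  interpret H2: hkset2 n p c m0 using strict core by unfold_locales auto
  have hk: "hk_length TYPE('k) H.G m = enat (card (H.Pset m))" for m
    using hk_length_eq[OF H.finG H.fin_SE[OF H2.fin_P]] H.card_SE by (simp only:)
  define e where "e = 1 + (1 / real (n p)) * (\<Sum>r=1..p. (real (n r) - 1) * (real (n r) - real (n (r - 1))))"
  have ee: "H2.ee = e" unfolding H2.ee_def H2.Dsum_def H2.dl_def e_def
    by (rule ee_identity[OF mono assms(5) Np])
  define f where "f m = real (the_enat (hk_length TYPE('k) H.G m)) / real m ^ 2" for m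
  have f: "f m = real (card (H.Pset m)) / real m ^ 2" for m unfolding f_def hk by simp
  have lim: "f \<longlonglongrightarrow> e" unfolding f ee[symmetric] by (rule H2.lim_P)
  have fin: "\<forall>m. hk_length TYPE('k) H.G m \<noteq> \<infinity>" using hk by simp
  show ?thesis
  proof (cases "CHAR('k) = 0")
    case True
    then show ?thesis unfolding has_ehk_def e_def[symmetric] using fin lim unfolding f_def by simp
  next
    case False
    define q where "q = CHAR('k)"
    have q2: "q \<ge> 2" using False CHAR_not_1 unfolding q_def
      by (metis One_nat_def less_2_cases not_le)
    have sm: "strict_mono (\<lambda>j. q ^ j)" unfolding strict_mono_def using q2
      by (intro allI impI power_strict_increasing) auto
    have "(f \<circ> (\<lambda>j. q ^ j)) \<longlonglongrightarrow> e" by (rule LIMSEQ_subseq_LIMSEQ[OF lim sm])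
    then have "(\<lambda>j. real (the_enat (hk_length TYPE('k) H.G (q ^ j))) / real (q ^ j) ^ 2) \<longlonglongrightarrow> e"
      unfolding f_def o_def .
    then show ?thesis unfolding has_ehk_def e_def[symmetric] q_def using fin False by simp
  qed
qed

end
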